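(* Let $H\in\mathbb{R}^{n\times d}$, $\Sigma\in\mathbb{R}^{n\times n}$ symmetric positive definite, $y\in\mathbb{R}^n$, $J\ge2$, and a fixed initial ensemble $v_0^{(1)},\dots,v_0^{(J)}$. Run stochastic EKI: $$v_{i+1}^{(j)}=v_i^{(j)}+\Gamma_iH^\top(H\Gamma_iH^\top+\Sigma)^{-1}(y+\varepsilon_i^{(j)}-Hv_i^{(j)}),$$ where $\Gamma_i$ is the empirical covariance of $v_i^{(1:J)}$ and $\varepsilon_i^{(j)}$ are i.i.d. $\mathcal{N}(0,\Sigma)$. Define $C_0=H\Gamma_0H^\top$, $C_{i+1}=\Sigma-\Sigma(C_i+\Sigma)^{-1}\Sigma$. Then for all $i\ge0$, $\mathbb{E}[H\Gamma_iH^\top]\le C_i$ in the Löwner order.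
   Context: $\Gamma_i=\frac1{J-1}\sum_j(v_i^{(j)}-\bar v_i)(v_i^{(j)}-\bar v_i)^\top$, $\bar v_i=\frac1J\sum_jv_i^{(j)}$. Löwner order: $A\le B$ iff $B-A$ is positive semidefinite. Expectation is over all perturbations $\varepsilon$. *)

theory Defs
  imports "HOL-Probability.Probability"
begin

definition outer :: "real^'a \<Rightarrow> real^'b \<Rightarrow> real^'b^'a" where
  "outer u w = (\<chi> i k. u $ i * w $ k)"

definition ens_mean :: "nat \<Rightarrow> (nat \<Rightarrow> real^'d) \<Rightarrow> real^'d" where
  "ens_mean J v = (1 / real J) *\<^sub>R (\<Sum>j<J. v j)"

definition emp_cov :: "nat \<Rightarrow> (nat \<Rightarrow> real^'d) \<Rightarrow> real^'d^'d" where
  "emp_cov J v = (1 / (real J - 1)) *\<^sub>R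
     (\<Sum>j<J. outer (v j - ens_mean J v) (v j - ens_mean J v))"

text \<open>Stochastic EKI ensemble at step i, for a given realisation e i j of the perturbations.\<close>
primrec eki_ens :: "real^'d^'n \<Rightarrow> real^'n^'n \<Rightarrow> real^'n \<Rightarrow> nat \<Rightarrow> (nat \<Rightarrow> real^'d)
    \<Rightarrow> (nat \<Rightarrow> nat \<Rightarrow> real^'n) \<Rightarrow> nat \<Rightarrow> (nat \<Rightarrow> real^'d)" where
  "eki_ens H S y J v0 e 0 = v0"
| "eki_ens H S y J v0 e (Suc i) =
     (let v = eki_ens H S y J v0 e i; G = emp_cov J v
      in (\<lambda>j. v j + (G ** transpose H ** matrix_inv (H ** G ** transpose H + S))
                     *v (y + e i j - H *v v j)))"

primrec Cseq :: "real^'d^'n \<Rightarrow> real^'n^'n \<Rightarrow> real^'d^'d \<Rightarrow> nat \<Rightarrow> real^'n^'n" where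
  "Cseq H S G0 0 = H ** G0 ** transpose H"
| "Cseq H S G0 (Suc i) = S - S ** matrix_inv (Cseq H S G0 i + S) ** S"

definition sym_posdef :: "real^'n^'n \<Rightarrow> bool" where
  "sym_posdef S \<longleftrightarrow> transpose S = S \<and> (\<forall>x. x \<noteq> 0 \<longrightarrow> 0 < x \<bullet> (S *v x))"

definition pos_semidef :: "real^'n^'n \<Rightarrow> bool" where
  "pos_semidef S \<longleftrightarrow> transpose S = S \<and> (\<forall>x. 0 \<le> x \<bullet> (S *v x))"

definition loewner_le :: "real^'n^'n \<Rightarrow> real^'n^'n \<Rightarrow> bool" where
  "loewner_le A B \<longleftrightarrow> pos_semidef (B - A)"

definition gaussian :: "real^'n^'n \<Rightarrow> (real^'n) measure" where
  "gaussian S = density lborel (\<lambda>x. ennreal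
      (exp (- (x \<bullet> (matrix_inv S *v x)) / 2) / sqrt ((2 * pi) ^ CARD('n) * det S)))"

end

theory Submission
  imports Defs
begin

lemma mv_inner: "((A::real^'m^'n) *v x) \<bullet> y = x \<bullet> (transpose A *v y)"
  unfolding inner_vec_def matrix_vector_mult_def transpose_def
  apply simp
  apply (simp add: sum_distrib_left sum_distrib_right)
  apply (subst sum.swap)
  apply (simp add: mult_ac)
  done

lemma sym_mv_inner: "transpose A = A \<Longrightarrow> ((A::real^'n^'n) *v x) \<bullet> y = x \<bullet> (A *v y)"
  using mv_inner[of A x y] by simp

lemma matrix_inv_props:
  fixes A :: "real^'n^'n"
  assumes "invertible A"
  shows "A ** matrix_inv A = mat 1" "matrix_inv A ** A = mat 1"
  using assms unfolding invertible_def matrix_inv_def by (metis (mono_tags, lifting) someI_ex)+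

lemma matrix_inv_mv:
  fixes A :: "real^'n^'n"
  assumes "invertible A"
  shows "A *v (matrix_inv A *v x) = x" "matrix_inv A *v (A *v x) = x"
  using matrix_inv_props[OF assms] by (simp_all add: matrix_vector_mul_assoc)

lemma invertible_if_ker:
  fixes A :: "real^'n^'n"
  assumes "\<And>x. A *v x = 0 \<Longrightarrow> x = 0"
  shows "invertible A"
proof -
  have "\<exists>B::real^'n^'n. B ** A = mat 1"
    using assms matrix_left_invertible_ker by blast
  then show ?thesis using invertible_left_inverse by blast
qed

lemma posdef_invertible:
  fixes A :: "real^'n^'n"
  assumes "\<And>x. x \<noteq> 0 \<Longrightarrow> 0 < x \<bullet> (A *v x)"
  shows "invertible A"
  by (rule invertible_if_ker) (metis assms inner_zero_right less_irrefl)

lemma transpose_matrix_inv: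
  fixes A :: "real^'n^'n"
  assumes "invertible A" "transpose A = A"
  shows "transpose (matrix_inv A) = matrix_inv A"
proof -
  have "transpose (matrix_inv A) ** A = mat 1"
    using matrix_inv_props(1)[OF assms(1)] assms(2)
    by (metis matrix_transpose_mul transpose_mat)
  then have "transpose (matrix_inv A) ** A ** matrix_inv A = matrix_inv A"
    by (simp add: matrix_mul_lid)
  moreover have "transpose (matrix_inv A) ** A ** matrix_inv A = transpose (matrix_inv A)"
    unfolding matrix_mul_assoc[symmetric] matrix_inv_props(1)[OF assms(1)] by (rule matrix_mul_rid)
  ultimately show ?thesis by simp
qed

lemma inv_tangent:
  fixes A :: "real^'n^'n"
  assumes inv: "invertible A" and sym: "transpose A = A" and psd: "\<And>x. 0 \<le> x \<bullet> (A *v x)"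
  shows "2 * (z \<bullet> w) - w \<bullet> (A *v w) \<le> z \<bullet> (matrix_inv A *v z)"
proof -
  define u where "u = matrix_inv A *v z"
  have Au: "A *v u = z" unfolding u_def by (rule matrix_inv_mv(1)[OF inv])
  have "0 \<le> (u - w) \<bullet> (A *v (u - w))" by (rule psd)
  also have "\<dots> = u \<bullet> (A *v u) - 2 * (w \<bullet> (A *v u)) + w \<bullet> (A *v w)"
    using sym_mv_inner[OF sym, of w u]
    by (simp add: matrix_vector_mult_diff_distrib inner_diff_left inner_diff_right inner_commute)
  finally show ?thesis using Au unfolding u_def by (simp add: inner_commute)
qed

lemma meas_vec_nth[measurable (raw)]:
  fixes f :: "'x \<Rightarrow> 'a::euclidean_space^'n"
  shows "f \<in> borel_measurable M \<Longrightarrow> (\<lambda>x. f x $ i) \<in> borel_measurable M"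
  by (rule borel_measurable_continuous_on[where f="\<lambda>v. v $ i"]) (auto intro: continuous_intros)

lemma meas_vec_lambda:
  assumes "\<And>i. (\<lambda>x. f x i) \<in> borel_measurable M"
  shows "(\<lambda>x. (\<chi> i. f x i) :: 'a::euclidean_space^'n) \<in> borel_measurable M"
proof (subst borel_measurable_euclidean_space, intro ballI)
  fix b :: "'a^'n" assume "b \<in> Basis"
  then obtain i u where b: "b = axis i u" "u \<in> Basis" unfolding Basis_vec_def by auto
  show "(\<lambda>x. (\<chi> i. f x i) \<bullet> b) \<in> borel_measurable M"
    unfolding b inner_axis using assms[of i] by simp
qed

lemma meas_mm[measurable (raw)]:
  fixes f :: "'x \<Rightarrow> real^'m^'n" and g :: "'x \<Rightarrow> real^'p^'m"
  assumes [measurable]: "f \<in> borel_measurable M" "g \<in> borel_measurable M"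
  shows "(\<lambda>x. f x ** g x) \<in> borel_measurable M"
  unfolding matrix_matrix_mult_def by (intro meas_vec_lambda) measurable

lemma meas_mv[measurable (raw)]:
  fixes f :: "'x \<Rightarrow> real^'m^'n" and g :: "'x \<Rightarrow> real^'m"
  assumes [measurable]: "f \<in> borel_measurable M" "g \<in> borel_measurable M"
  shows "(\<lambda>x. f x *v g x) \<in> borel_measurable M"
  unfolding matrix_vector_mult_def by (intro meas_vec_lambda) measurable

lemma meas_transpose[measurable (raw)]:
  fixes f :: "'x \<Rightarrow> real^'m^'n"
  assumes [measurable]: "f \<in> borel_measurable M"
  shows "(\<lambda>x. transpose (f x)) \<in> borel_measurable M"
  unfolding transpose_def by (intro meas_vec_lambda) measurable

lemma meas_outer[measurable (raw)]:
  fixes f :: "'x \<Rightarrow> real^'m" and g :: "'x \<Rightarrow> real^'n"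
  assumes [measurable]: "f \<in> borel_measurable M" "g \<in> borel_measurable M"
  shows "(\<lambda>x. outer (f x) (g x)) \<in> borel_measurable M"
  unfolding outer_def by (intro meas_vec_lambda) measurable

lemma meas_det[measurable (raw)]:
  fixes f :: "'x \<Rightarrow> real^'n^'n"
  assumes [measurable]: "f \<in> borel_measurable M"
  shows "(\<lambda>x. det (f x)) \<in> borel_measurable M"
  unfolding det_def by measurable

lemma axis_nth1: "axis c (1::real) $ i = (if i = c then 1 else 0)"
  by (simp add: axis_def)

lemma matrix_inv_cramer:
  fixes A :: "real^'n^'n"
  assumes "invertible A"
  shows "matrix_inv A = (\<chi> r c. det (\<chi> i j. if j = r then (if i = c then 1 else 0) else A $ i $ j) / det A)"
proof -
  have d: "det A \<noteq> 0" using assms invertible_det_nz by blast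
  have "matrix_inv A $ r $ c = det (\<chi> i j. if j = r then (if i = c then 1 else 0) else A $ i $ j) / det A" for r c
  proof -
    define b :: "real^'n" where "b = (\<chi> i. if i = c then 1 else 0)"
    have "A *v (matrix_inv A *v b) = b" by (rule matrix_inv_mv(1)[OF assms])
    then have "matrix_inv A *v b = (\<chi> k. det(\<chi> i j. if j=k then b$i else A$i$j) / det A)"
      using cramer[OF d] by blast
    then have "(matrix_inv A *v b) $ r = det(\<chi> i j. if j=r then b$i else A$i$j) / det A"
      by simp
    moreover have "(matrix_inv A *v b) $ r = matrix_inv A $ r $ c"
      by (simp add: matrix_vector_mult_def b_def if_distrib cong: if_cong)
    moreover have "(\<chi> i j. if j=r then b$i else A$i$j) = (\<chi> i j. if j = r then (if i = c then 1 else 0) else A$i$j)"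
      unfolding b_def by (simp add: vec_eq_iff)
    ultimately show ?thesis by metis
  qed
  then show ?thesis by (simp add: vec_eq_iff)
qed

lemma meas_matrix_inv:
  fixes f :: "'x \<Rightarrow> real^'n^'n"
  assumes "f \<in> borel_measurable M" "\<And>x. x \<in> space M \<Longrightarrow> invertible (f x)"
  shows "(\<lambda>x. matrix_inv (f x)) \<in> borel_measurable M"
proof -
  have e: "(\<lambda>x. if j = r then (if i = c then 1 else 0) else f x $ i $ j) \<in> borel_measurable M" for r c i j :: 'n
    by (cases "j = r") (simp_all add: meas_vec_nth assms(1))
  have "(\<lambda>x. (\<chi> r c. det (\<chi> i j. if j = r then (if i = c then 1 else 0) else f x $ i $ j) / det (f x)) :: real^'n^'n) \<in> borel_measurable M"
    by (intro meas_vec_lambda borel_measurable_divide meas_det e assms(1))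
  then show ?thesis
    by (rule measurable_cong[THEN iffD1, rotated]) (simp add: matrix_inv_cramer assms(2))
qed

lemma sym_posdef_facts:
  fixes S :: "real^'n^'n"
  assumes "sym_posdef S"
  shows "invertible S" "transpose S = S" "transpose (matrix_inv S) = matrix_inv S"
    "\<And>x. 0 \<le> x \<bullet> (S *v x)"
proof -
  show inv: "invertible S" using assms unfolding sym_posdef_def by (intro posdef_invertible) auto
  show sym: "transpose S = S" using assms unfolding sym_posdef_def by auto
  show "transpose (matrix_inv S) = matrix_inv S" by (rule transpose_matrix_inv[OF inv sym])
  fix x show "0 \<le> x \<bullet> (S *v x)" using assms unfolding sym_posdef_def
    by (cases "x = 0") (auto intro: less_imp_le)
qed

lemma quad_shift:
  fixes S :: "real^'n^'n"
  assumes "sym_posdef S"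
  shows "(x - S *v u) \<bullet> (matrix_inv S *v (x - S *v u))
       = x \<bullet> (matrix_inv S *v x) - 2 * (u \<bullet> x) + u \<bullet> (S *v u)"
proof -
  note F = sym_posdef_facts[OF assms]
  have a: "matrix_inv S *v (S *v u) = u" by (rule matrix_inv_mv(2)[OF F(1)])
  have b: "(S *v u) \<bullet> (matrix_inv S *v x) = u \<bullet> x"
    using sym_mv_inner[OF F(2), of u "matrix_inv S *v x"] matrix_inv_mv(1)[OF F(1), of x] by simp
  have c: "(S *v u) \<bullet> u = u \<bullet> (S *v u)" by (simp add: inner_commute)
  show ?thesis
    by (simp add: matrix_vector_mult_diff_distrib a inner_diff_left inner_diff_right b c inner_commute)
qed

lemma gauss_mgf:
  fixes S :: "real^'n^'n" and X :: "'w \<Rightarrow> real^'n"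
  assumes S: "sym_posdef S" and P: "prob_space M" and Xm[measurable]: "X \<in> borel_measurable M"
    and D: "distr M borel X = gaussian S"
  shows "(\<integral>\<^sup>+\<omega>. ennreal (exp (u \<bullet> X \<omega>)) \<partial>M) = ennreal (exp ((u \<bullet> (S *v u)) / 2))"
proof -
  define Si where "Si = matrix_inv S"
  define N where "N = sqrt ((2 * pi) ^ CARD('n) * det S)"
  define \<phi> where "\<phi> x = exp (- (x \<bullet> (Si *v x)) / 2) / N" for x
  define q where "q = u \<bullet> (S *v u)"
  have G: "gaussian S = density lborel (\<lambda>x. ennreal (\<phi> x))"
    unfolding gaussian_def \<phi>_def Si_def N_def ..
  have phim[measurable]: "\<phi> \<in> borel_measurable borel" unfolding \<phi>_def by measurable
  have one: "(\<integral>\<^sup>+x. ennreal (\<phi> x) \<partial>lborel) = 1"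
  proof -
    have "(\<integral>\<^sup>+x. ennreal (\<phi> x) \<partial>lborel) = emeasure (density lborel (\<lambda>x. ennreal (\<phi> x))) UNIV"
      by (subst emeasure_density) auto
    also have "\<dots> = emeasure (distr M borel X) (space (distr M borel X))"
      using D G by simp
    also have "\<dots> = 1"
      using prob_space.prob_space_distr[OF P Xm] prob_space.emeasure_space_1 by blast
    finally show ?thesis .
  qed
  have pt: "ennreal (\<phi> x) * ennreal (exp (u \<bullet> x)) = ennreal (exp (q / 2)) * ennreal (\<phi> (x - S *v u))" for x
  proof -
    have e: "- (x \<bullet> (Si *v x)) / 2 + u \<bullet> x = q / 2 + - ((x - S *v u) \<bullet> (Si *v (x - S *v u))) / 2"
      unfolding Si_def q_def quad_shift[OF S] by (simp add: field_simps)
    have ee: "exp (- (x \<bullet> (Si *v x)) / 2) * exp (u \<bullet> x) = exp (q / 2) * exp (- ((x - S *v u) \<bullet> (Si *v (x - S *v u))) / 2)"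
      by (simp only: mult_exp_exp e)
    have "\<phi> x * exp (u \<bullet> x) = (exp (- (x \<bullet> (Si *v x)) / 2) * exp (u \<bullet> x)) / N"
      unfolding \<phi>_def by simp
    also have "\<dots> = (exp (q / 2) * exp (- ((x - S *v u) \<bullet> (Si *v (x - S *v u))) / 2)) / N"
      by (simp only: ee)
    also have "\<dots> = exp (q / 2) * \<phi> (x - S *v u)"
      unfolding \<phi>_def by simp
    finally have "\<phi> x * exp (u \<bullet> x) = exp (q / 2) * \<phi> (x - S *v u)" .
    then show ?thesis by (simp add: ennreal_mult''[symmetric] ennreal_mult'[symmetric])
  qed
  have "(\<integral>\<^sup>+\<omega>. ennreal (exp (u \<bullet> X \<omega>)) \<partial>M) = (\<integral>\<^sup>+x. ennreal (exp (u \<bullet> x)) \<partial>distr M borel X)"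
    by (simp add: nn_integral_distr)
  also have "\<dots> = (\<integral>\<^sup>+x. ennreal (\<phi> x) * ennreal (exp (u \<bullet> x)) \<partial>lborel)"
    unfolding D G by (simp add: nn_integral_density)
  also have "\<dots> = (\<integral>\<^sup>+x. ennreal (exp (q / 2)) * ennreal (\<phi> (x - S *v u)) \<partial>lborel)"
    using pt by simp
  also have "\<dots> = ennreal (exp (q / 2)) * (\<integral>\<^sup>+x. ennreal (\<phi> (x - S *v u)) \<partial>lborel)"
    by (rule nn_integral_cmult) measurable
  also have "(\<integral>\<^sup>+x. ennreal (\<phi> (x - S *v u)) \<partial>lborel) = (\<integral>\<^sup>+x. ennreal (\<phi> x) \<partial>lborel)"
  proof -
    have "(\<integral>\<^sup>+x. ennreal (\<phi> x) \<partial>lborel) = (\<integral>\<^sup>+x. ennreal (\<phi> x) \<partial>distr lborel borel ((+) (- (S *v u))))"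
      by (simp add: lborel_distr_plus)
    also have "\<dots> = (\<integral>\<^sup>+x. ennreal (\<phi> (- (S *v u) + x)) \<partial>lborel)"
      by (simp add: nn_integral_distr)
    finally show ?thesis by simp
  qed
  finally show ?thesis using one q_def by simp
qed

lemma mv_neg: "(A::real^'m^'n) *v (- x) = - (A *v x)"
  by (simp add: matrix_vector_mult_def vec_eq_iff sum_negf)

lemma norm_helper: "a < b \<Longrightarrow> - a < c \<Longrightarrow> 0 < b \<Longrightarrow> 0 < c \<Longrightarrow> norm (a::real) \<le> norm (b + c)"
  by (simp add: abs_if)

lemma cosh_quad: "2 + t\<^sup>2 \<le> exp t + exp (- t)" for t :: real
proof -
  have g: "2 * t \<le> exp t - exp (- t)" if "0 \<le> t" for t :: real
  proof -
    have "(\<lambda>t. exp t - exp (- t) - 2 * t) 0 \<le> (\<lambda>t. exp t - exp (- t) - 2 * t) t"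
    proof (rule DERIV_nonneg_imp_nondecreasing[OF that])
      fix x :: real
      have "2 \<le> exp x + exp (- x)" using exp_ge_add_one_self[of x] exp_ge_add_one_self[of "-x"] by linarith
      moreover have "DERIV (\<lambda>t. exp t - exp (- t) - 2 * t) x :> exp x + exp (- x) - 2"
        by (auto intro!: derivative_eq_intros)
      ultimately show "\<exists>y. DERIV (\<lambda>t. exp t - exp (- t) - 2 * t) x :> y \<and> 0 \<le> y" by force
    qed
    then show ?thesis by simp
  qed
  have h: "2 + t\<^sup>2 \<le> exp t + exp (- t)" if "0 \<le> t" for t :: real
  proof -
    have "(\<lambda>t. exp t + exp (- t) - t\<^sup>2) 0 \<le> (\<lambda>t. exp t + exp (- t) - t\<^sup>2) t"
    proof (rule DERIV_nonneg_imp_nondecreasing[OF that])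
      fix x :: real assume "0 \<le> x"
      then have "0 \<le> exp x - exp (- x) - 2 * x" using g[of x] by linarith
      moreover have "DERIV (\<lambda>t. exp t + exp (- t) - t\<^sup>2) x :> exp x - exp (- x) - 2 * x"
        by (auto intro!: derivative_eq_intros)
      ultimately show "\<exists>y. DERIV (\<lambda>t. exp t + exp (- t) - t\<^sup>2) x :> y \<and> 0 \<le> y" by force
    qed
    then show ?thesis by simp
  qed
  show ?thesis
  proof (cases "0 \<le> t")
    case True then show ?thesis by (rule h)
  next
    case False then show ?thesis using h[of "-t"] by (simp add: add.commute)
  qed
qed

lemma exp_m1_le: "exp x - 1 \<le> x * exp x" for x :: real
proof -
  have "1 - x \<le> exp (- x)" using exp_ge_add_one_self[of "-x"] by simp
  then have "(1 - x) * exp x \<le> exp (- x) * exp x" by (simp add: mult_right_mono)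
  then show ?thesis by (simp add: mult_exp_exp algebra_simps)
qed

lemma gauss_exp:
  fixes S :: "real^'n^'n" and X :: "'w \<Rightarrow> real^'n"
  assumes S: "sym_posdef S" and P: "prob_space M" and Xm[measurable]: "X \<in> borel_measurable M"
    and D: "distr M borel X = gaussian S"
  shows "integrable M (\<lambda>\<omega>. exp (u \<bullet> X \<omega>))" "(\<integral>\<omega>. exp (u \<bullet> X \<omega>) \<partial>M) = exp ((u \<bullet> (S *v u)) / 2)"
proof -
  note mgf = gauss_mgf[OF S P Xm D, of u]
  show I: "integrable M (\<lambda>\<omega>. exp (u \<bullet> X \<omega>))"
    by (rule integrableI_nonneg) (auto simp: mgf)
  have "ennreal (\<integral>\<omega>. exp (u \<bullet> X \<omega>) \<partial>M) = ennreal (exp ((u \<bullet> (S *v u)) / 2))"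
    using nn_integral_eq_integral[OF I] mgf by simp
  then show "(\<integral>\<omega>. exp (u \<bullet> X \<omega>) \<partial>M) = exp ((u \<bullet> (S *v u)) / 2)"
    by (subst (asm) ennreal_inj) auto
qed

lemma gauss_moments:
  fixes S :: "real^'n^'n" and X :: "'w \<Rightarrow> real^'n"
  assumes S: "sym_posdef S" and P: "prob_space M" and Xm[measurable]: "X \<in> borel_measurable M"
    and D: "distr M borel X = gaussian S"
  shows "integrable M (\<lambda>\<omega>. (u \<bullet> X \<omega>)\<^sup>2)" "integrable M (\<lambda>\<omega>. u \<bullet> X \<omega>)"
    "(\<integral>\<omega>. u \<bullet> X \<omega> \<partial>M) = 0" "(\<integral>\<omega>. (u \<bullet> X \<omega>)\<^sup>2 \<partial>M) \<le> u \<bullet> (S *v u)"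
proof -
  interpret prob_space M by (rule P)
  note ge = gauss_exp[OF S P Xm D]
  have Ie: "integrable M (\<lambda>\<omega>. exp (v \<bullet> X \<omega>) + exp (- (v \<bullet> X \<omega>)))" for v
    using ge(1)[of v] ge(1)[of "-v"] by (simp add: integrable_add)
  have sqI: "integrable M (\<lambda>\<omega>. (v \<bullet> X \<omega>)\<^sup>2)" for v
    by (rule Bochner_Integration.integrable_bound[OF Ie[of v]]) (auto intro!: AE_I2 simp: add_nonneg_nonneg
        intro: order_trans[OF _ cosh_quad])
  have linI: "integrable M (\<lambda>\<omega>. v \<bullet> X \<omega>)" for v
  proof (rule Bochner_Integration.integrable_bound[OF Ie[of v]])
    show "AE x in M. norm (v \<bullet> X x) \<le> norm (exp (v \<bullet> X x) + exp (- (v \<bullet> X x)))"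
    proof (intro AE_I2)
      fix x
      have "v \<bullet> X x < exp (v \<bullet> X x)" "- (v \<bullet> X x) < exp (- (v \<bullet> X x))"
        using exp_ge_add_one_self[of "v \<bullet> X x"] exp_ge_add_one_self[of "- (v \<bullet> X x)"] by linarith+
      moreover have "0 < exp (v \<bullet> X x)" "0 < exp (- (v \<bullet> X x))" by simp_all
      ultimately show "norm (v \<bullet> X x) \<le> norm (exp (v \<bullet> X x) + exp (- (v \<bullet> X x)))"
        by (rule norm_helper)
    qed
  qed measurable
  show "integrable M (\<lambda>\<omega>. (u \<bullet> X \<omega>)\<^sup>2)" "integrable M (\<lambda>\<omega>. u \<bullet> X \<omega>)" by (rule sqI, rule linI)
  have A: "(\<integral>\<omega>. (v \<bullet> X \<omega>)\<^sup>2 \<partial>M) \<le> 2 * exp ((v \<bullet> (S *v v)) / 2) - 2" for v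
  proof -
    have "(\<integral>\<omega>. (v \<bullet> X \<omega>)\<^sup>2 \<partial>M) \<le> (\<integral>\<omega>. exp (v \<bullet> X \<omega>) + exp (- (v \<bullet> X \<omega>)) - 2 \<partial>M)"
      by (rule integral_mono[OF sqI]) (auto intro!: Bochner_Integration.integrable_diff Ie simp: cosh_quad algebra_simps)
    also have "\<dots> = (\<integral>\<omega>. exp (v \<bullet> X \<omega>) \<partial>M) + (\<integral>\<omega>. exp ((- v) \<bullet> X \<omega>) \<partial>M) - 2"
      using ge(1)[of v] ge(1)[of "-v"] by (simp add: Bochner_Integration.integral_diff Bochner_Integration.integral_add
          Bochner_Integration.integrable_add prob_space)
    also have "\<dots> = 2 * exp ((v \<bullet> (S *v v)) / 2) - 2"
      using ge(2)[of "-v"] by (simp add: ge(2) mv_neg)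
    finally show ?thesis .
  qed
  have B: "(\<integral>\<omega>. v \<bullet> X \<omega> \<partial>M) \<le> exp ((v \<bullet> (S *v v)) / 2) - 1" for v
  proof -
    have "(\<integral>\<omega>. v \<bullet> X \<omega> \<partial>M) \<le> (\<integral>\<omega>. exp (v \<bullet> X \<omega>) - 1 \<partial>M)"
      using exp_ge_add_one_self
      by (intro integral_mono[OF linI]) (auto intro!: Bochner_Integration.integrable_diff ge(1) simp: algebra_simps)
    also have "\<dots> = exp ((v \<bullet> (S *v v)) / 2) - 1"
      using ge(1)[of v] by (simp add: Bochner_Integration.integral_diff prob_space ge(2))
    finally show ?thesis .
  qed
  define q where "q = u \<bullet> (S *v u)"
  have sc: "(s *\<^sub>R v) \<bullet> (S *v (s *\<^sub>R v)) = s\<^sup>2 * (v \<bullet> (S *v v))" for s v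
    by (simp add: matrix_vector_mult_scaleR power2_eq_square)
  have A2: "(\<integral>\<omega>. (u \<bullet> X \<omega>)\<^sup>2 \<partial>M) \<le> q * exp (s\<^sup>2 * q / 2)" if "0 < s" for s
  proof -
    have "s\<^sup>2 * (\<integral>\<omega>. (u \<bullet> X \<omega>)\<^sup>2 \<partial>M) = (\<integral>\<omega>. ((s *\<^sub>R u) \<bullet> X \<omega>)\<^sup>2 \<partial>M)"
      by (simp add: power_mult_distrib)
    also have "\<dots> \<le> 2 * exp (s\<^sup>2 * q / 2) - 2" using A[of "s *\<^sub>R u"] unfolding sc q_def by simp
    also have "\<dots> \<le> s\<^sup>2 * (q * exp (s\<^sup>2 * q / 2))" using exp_m1_le[of "s\<^sup>2 * q / 2"] by simp
    finally show ?thesis using that by simp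
  qed
  have "((\<lambda>s. q * exp (s\<^sup>2 * q / 2)) \<longlongrightarrow> q * exp (0\<^sup>2 * q / 2)) (at_right 0)"
    by (intro tendsto_intros) auto
  then have L1: "((\<lambda>s. q * exp (s\<^sup>2 * q / 2)) \<longlongrightarrow> q) (at_right 0)" by simp
  show "(\<integral>\<omega>. (u \<bullet> X \<omega>)\<^sup>2 \<partial>M) \<le> u \<bullet> (S *v u)"
    unfolding q_def[symmetric]
    by (rule tendsto_lowerbound[OF L1]) (auto intro: eventually_mono[OF eventually_at_right_less] A2)
  have B2: "(\<integral>\<omega>. v \<bullet> X \<omega> \<partial>M) \<le> 0" for v
  proof -
    define r where "r = v \<bullet> (S *v v)"
    have Bs: "(\<integral>\<omega>. v \<bullet> X \<omega> \<partial>M) \<le> s * r / 2 * exp (s\<^sup>2 * r / 2)" if "0 < s" for s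
    proof -
      have "s * (\<integral>\<omega>. v \<bullet> X \<omega> \<partial>M) = (\<integral>\<omega>. (s *\<^sub>R v) \<bullet> X \<omega> \<partial>M)"
        by simp
      also have "\<dots> \<le> exp (s\<^sup>2 * r / 2) - 1" using B[of "s *\<^sub>R v"] unfolding sc r_def by simp
      also have "\<dots> \<le> s * (s * r / 2 * exp (s\<^sup>2 * r / 2))" using exp_m1_le[of "s\<^sup>2 * r / 2"]
        by (simp add: power2_eq_square mult_ac)
      finally show ?thesis using that by simp
    qed
    have "((\<lambda>s. s * r / 2 * exp (s\<^sup>2 * r / 2)) \<longlongrightarrow> 0 * r / 2 * exp (0\<^sup>2 * r / 2)) (at_right 0)"
      by (intro tendsto_intros) auto
    then have L2: "((\<lambda>s. s * r / 2 * exp (s\<^sup>2 * r / 2)) \<longlongrightarrow> 0) (at_right 0)" by simp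
    show ?thesis
    proof (rule tendsto_lowerbound[OF L2])
      show "\<forall>\<^sub>F s in at_right (0::real). (\<integral>\<omega>. v \<bullet> X \<omega> \<partial>M) \<le> s * r / 2 * exp (s\<^sup>2 * r / 2)"
        using eventually_at_right_less[of "0::real"] by (rule eventually_mono) (rule Bs)
    qed simp
  qed
  show "(\<integral>\<omega>. u \<bullet> X \<omega> \<partial>M) = 0"
    using B2[of u] B2[of "-u"] by simp
qed

section \<open>Generic psd algebra\<close>

definition psd :: "real^'n^'n \<Rightarrow> bool" where
  "psd C \<longleftrightarrow> transpose C = C \<and> (\<forall>x. 0 \<le> x \<bullet> (C *v x))"

lemma sym_posdef_psd: "sym_posdef S \<Longrightarrow> psd S"
  using sym_posdef_facts(2,4) unfolding psd_def by blast

lemma psd_add_posdef: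
  fixes C S :: "real^'n^'n"
  assumes C: "psd C" and S: "sym_posdef S"
  shows "sym_posdef (C + S)"
proof -
  have t: "transpose (C + S) = C + S"
    using assms unfolding psd_def sym_posdef_def by (simp add: transpose_def vec_eq_iff)
  have "0 < x \<bullet> ((C + S) *v x)" if "x \<noteq> 0" for x
  proof -
    have "0 \<le> x \<bullet> (C *v x)" using C unfolding psd_def by blast
    moreover have "0 < x \<bullet> (S *v x)" using S that unfolding sym_posdef_def by blast
    ultimately show ?thesis by (simp add: matrix_vector_mult_add_rdistrib inner_add_right)
  qed
  then show ?thesis using t unfolding sym_posdef_def by blast
qed

lemma posdef_inv_psd:
  fixes A :: "real^'n^'n"
  assumes A: "sym_posdef A"
  shows "psd (matrix_inv A)"
proof -
  note F = sym_posdef_facts[OF A]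
  have "0 \<le> y \<bullet> (matrix_inv A *v y)" for y
  proof -
    define w where "w = matrix_inv A *v y"
    have "y = A *v w" unfolding w_def by (simp add: matrix_inv_mv(1)[OF F(1)])
    then have "y \<bullet> (matrix_inv A *v y) = (A *v w) \<bullet> w" unfolding w_def by simp
    also have "\<dots> = w \<bullet> (A *v w)" by (simp add: inner_commute)
    finally show ?thesis using F(4) by simp
  qed
  then show ?thesis using F(3) unfolding psd_def by blast
qed

lemma key_identity:
  fixes C S :: "real^'n^'n" and x :: "real^'n"
  assumes C: "psd C" and S: "sym_posdef S"
  defines "K \<equiv> matrix_inv (C + S)"
  defines "b \<equiv> K *v (C *v x)"
  shows "(x - b) \<bullet> (C *v (x - b)) + b \<bullet> (S *v b) = x \<bullet> (S *v x) - (S *v x) \<bullet> (K *v (S *v x))"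
proof -
  note FS = sym_posdef_facts[OF S]
  have CS: "sym_posdef (C + S)" by (rule psd_add_posdef[OF C S])
  note F = sym_posdef_facts[OF CS]
  have symC: "transpose C = C" using C unfolding psd_def by simp
  define p where "p = K *v (S *v x)"
  have pb: "p + b = x"
    unfolding p_def b_def K_def
    by (metis matrix_inv_mv(2)[OF F(1)] matrix_vector_mult_add_rdistrib matrix_vector_right_distrib add.commute)
  have Kw: "(C + S) *v (K *v w) = w" for w unfolding K_def by (rule matrix_inv_mv(1)[OF F(1)])
  have Cp: "C *v p = S *v x - S *v p"
    using Kw[of "S *v x"] unfolding p_def by (simp add: matrix_vector_mult_add_rdistrib algebra_simps)
  have Sb: "S *v b = S *v x - S *v p"
    using pb by (metis add_diff_cancel_left' matrix_vector_mult_diff_distrib)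
  have xb: "x - b = p" using pb by (simp add: algebra_simps)
  have "(x - b) \<bullet> (C *v (x - b)) + b \<bullet> (S *v b) = p \<bullet> (S *v b) + b \<bullet> (S *v b)"
    unfolding xb Cp Sb by simp
  also have "\<dots> = (p + b) \<bullet> (S *v b)" by (simp add: inner_add_left)
  also have "\<dots> = (S *v x) \<bullet> b" unfolding pb using sym_mv_inner[OF FS(2), of x b] by simp
  also have "\<dots> = (S *v x) \<bullet> (x - p)"
  proof -
    have "b = x - p" using pb by (simp add: algebra_simps)
    then show ?thesis by simp
  qed
  also have "\<dots> = x \<bullet> (S *v x) - (S *v x) \<bullet> (K *v (S *v x))"
    unfolding p_def by (simp add: inner_diff_right inner_commute)
  finally show ?thesis .
qed

lemma quad_inv_nonneg:
  fixes C S :: "real^'n^'n"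
  assumes C: "psd C" and S: "sym_posdef S"
  shows "0 \<le> z \<bullet> (matrix_inv (C + S) *v z)"
  using posdef_inv_psd[OF psd_add_posdef[OF C S]] unfolding psd_def by blast

lemma psd_cs:
  fixes S :: "real^'n^'n"
  assumes S: "sym_posdef S"
  shows "(b \<bullet> w)\<^sup>2 \<le> (b \<bullet> (S *v b)) * (w \<bullet> (matrix_inv S *v w))"
proof -
  note F = sym_posdef_facts[OF S]
  define u where "u = matrix_inv S *v w"
  have w: "w = S *v u" unfolding u_def by (simp add: matrix_inv_mv(1)[OF F(1)])
  have uw: "w \<bullet> (matrix_inv S *v w) = u \<bullet> (S *v u)" unfolding u_def
    by (simp add: matrix_inv_mv(1)[OF F(1)] inner_commute)
  have quad: "0 \<le> (b \<bullet> (S *v b)) - 2 * t * (b \<bullet> (S *v u)) + t\<^sup>2 * (u \<bullet> (S *v u))" for t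
  proof -
    have "0 \<le> (b - t *\<^sub>R u) \<bullet> (S *v (b - t *\<^sub>R u))" by (rule F(4))
    also have "\<dots> = (b \<bullet> (S *v b)) - 2 * t * (b \<bullet> (S *v u)) + t\<^sup>2 * (u \<bullet> (S *v u))"
      using sym_mv_inner[OF F(2), of u b]
      by (simp add: matrix_vector_mult_diff_distrib matrix_vector_mult_scaleR inner_diff_left inner_diff_right
          power2_eq_square algebra_simps inner_commute)
    finally show ?thesis .
  qed
  show ?thesis
  proof (cases "u = 0")
    case True then show ?thesis using w by simp
  next
    case False
    then have pos: "0 < u \<bullet> (S *v u)" using S unfolding sym_posdef_def by blast
    define t where "t = (b \<bullet> (S *v u)) / (u \<bullet> (S *v u))"
    have "0 \<le> (b \<bullet> (S *v b)) - (b \<bullet> (S *v u))\<^sup>2 / (u \<bullet> (S *v u))"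
      using quad[of t] pos unfolding t_def by (simp add: power2_eq_square field_simps)
    then have "(b \<bullet> (S *v u))\<^sup>2 \<le> (b \<bullet> (S *v b)) * (u \<bullet> (S *v u))"
      using pos by (simp add: field_simps)
    then show ?thesis unfolding uw unfolding w .
  qed
qed

declare transpose_matrix_vector [simp del] vector_transpose_matrix [simp del]

lemma mv_axis: "((A::real^'m^'n) *v axis b 1) $ a = A $ a $ b"
  unfolding matrix_vector_mult_def axis_def by (simp add: if_distrib cong: if_cong)

lemma entry_form: "(A::real^'m^'n) $ a $ b = axis a 1 \<bullet> (A *v axis b 1)"
  by (simp only: inner_axis' mv_axis) simp

lemma sym_by_entries: "(\<And>a b. (A::real^'n^'n) $ a $ b = A $ b $ a) \<Longrightarrow> transpose A = A"
  by (simp add: transpose_def vec_eq_iff)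

lemma mv_sum: "(A::real^'m^'n) *v (\<Sum>j\<in>F. w j) = (\<Sum>j\<in>F. A *v w j)"
  by (induction F rule: infinite_finite_induct) (simp_all add: matrix_vector_right_distrib)

lemma emp_cov_mv:
  "emp_cov J v *v w = (1 / (real J - 1)) *\<^sub>R (\<Sum>j<J. ((v j - ens_mean J v) \<bullet> w) *\<^sub>R (v j - ens_mean J v))"
proof -
  define a where "a j = v j - ens_mean J v" for j
  have "(emp_cov J v *v w) $ i = (1 / (real J - 1)) * (\<Sum>j<J. (a j \<bullet> w) * a j $ i)" for i
  proof -
    have "(emp_cov J v *v w) $ i = (\<Sum>k\<in>UNIV. (1 / (real J - 1)) * (\<Sum>j<J. a j $ i * a j $ k) * w $ k)"
      unfolding emp_cov_def outer_def matrix_vector_mult_def a_def by (simp add: sum_component)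
    also have "\<dots> = (1 / (real J - 1)) * (\<Sum>k\<in>UNIV. \<Sum>j<J. a j $ i * a j $ k * w $ k)"
      by (simp add: sum_distrib_left sum_distrib_right mult.assoc)
    also have "\<dots> = (1 / (real J - 1)) * (\<Sum>j<J. \<Sum>k\<in>UNIV. a j $ i * a j $ k * w $ k)"
      by (subst sum.swap) simp
    also have "\<dots> = (1 / (real J - 1)) * (\<Sum>j<J. (a j \<bullet> w) * a j $ i)"
      by (simp add: inner_vec_def sum_distrib_left sum_distrib_right mult_ac)
    finally show ?thesis .
  qed
  then show ?thesis unfolding a_def[symmetric] by (simp add: vec_eq_iff sum_component)
qed

definition Cm :: "real^'d^'n \<Rightarrow> nat \<Rightarrow> (nat \<Rightarrow> real^'d) \<Rightarrow> real^'n^'n" where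
  "Cm H J v = H ** emp_cov J v ** transpose H"

definition dd :: "real^'d^'n \<Rightarrow> nat \<Rightarrow> (nat \<Rightarrow> real^'d) \<Rightarrow> nat \<Rightarrow> real^'n" where
  "dd H J v j = H *v (v j - ens_mean J v)"

lemma Cm_form:
  "x \<bullet> (Cm H J v *v z) = (1 / (real J - 1)) * (\<Sum>j<J. (x \<bullet> dd H J v j) * (z \<bullet> dd H J v j))"
proof -
  define a where "a j = v j - ens_mean J v" for j
  have "Cm H J v *v z = H *v (emp_cov J v *v (transpose H *v z))"
    unfolding Cm_def by (simp only: matrix_vector_mul_assoc matrix_mul_assoc)
  also have "\<dots> = (1 / (real J - 1)) *\<^sub>R (\<Sum>j<J. ((a j) \<bullet> (transpose H *v z)) *\<^sub>R (H *v a j))"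
    unfolding emp_cov_mv a_def[symmetric] by (simp add: matrix_vector_mult_scaleR mv_sum)
  finally have "x \<bullet> (Cm H J v *v z) = (1 / (real J - 1)) * (\<Sum>j<J. ((a j) \<bullet> (transpose H *v z)) * (x \<bullet> (H *v a j)))"
    by (simp add: inner_sum_right)
  moreover have "a j \<bullet> (transpose H *v z) = z \<bullet> (H *v a j)" for j
    using mv_inner[of H "a j" z] by (simp add: inner_commute)
  ultimately show ?thesis unfolding dd_def a_def by (simp add: mult.commute)
qed

lemma Cm_psd: "psd (Cm H J v)"
  unfolding psd_def
proof
  show "transpose (Cm H J v) = Cm H J v"
    by (rule sym_by_entries) (simp add: entry_form Cm_form mult.commute)
  show "\<forall>x. 0 \<le> x \<bullet> (Cm H J v *v x)"
  proof
    fix x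
    show "0 \<le> x \<bullet> (Cm H J v *v x)"
    proof (cases "J = 0")
      case False
      then have "0 \<le> 1 / (real J - 1)" by simp
      moreover have "0 \<le> (\<Sum>j<J. (x \<bullet> dd H J v j) * (x \<bullet> dd H J v j))"
        by (intro sum_nonneg) simp
      ultimately show ?thesis unfolding Cm_form by (rule mult_nonneg_nonneg)
    qed (simp add: Cm_form)
  qed
qed

definition Km :: "real^'d^'n \<Rightarrow> real^'n^'n \<Rightarrow> nat \<Rightarrow> (nat \<Rightarrow> real^'d) \<Rightarrow> real^'n^'n" where
  "Km H S J v = matrix_inv (Cm H J v + S)"

definition stp :: "real^'d^'n \<Rightarrow> real^'n^'n \<Rightarrow> real^'n \<Rightarrow> nat \<Rightarrow> (nat \<Rightarrow> real^'d) \<Rightarrow> (nat \<Rightarrow> real^'n) \<Rightarrow> (nat \<Rightarrow> real^'d)" where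
  "stp H S y J v e = (\<lambda>j. v j + (emp_cov J v ** transpose H ** Km H S J v) *v (y + e j - H *v v j))"

lemma eki_Suc: "eki_ens H S y J v0 e (Suc i) = stp H S y J (eki_ens H S y J v0 e i) (e i)"
  by (simp add: stp_def Km_def Cm_def Let_def)

definition bb :: "real^'d^'n \<Rightarrow> real^'n^'n \<Rightarrow> nat \<Rightarrow> (nat \<Rightarrow> real^'d) \<Rightarrow> real^'n \<Rightarrow> real^'n" where
  "bb H S J v x = Km H S J v *v (Cm H J v *v x)"

definition aa :: "real^'d^'n \<Rightarrow> real^'n^'n \<Rightarrow> nat \<Rightarrow> (nat \<Rightarrow> real^'d) \<Rightarrow> real^'n \<Rightarrow> nat \<Rightarrow> real" where
  "aa H S J v x j = (x - bb H S J v x) \<bullet> dd H J v j"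

lemma ens_mean_stp:
  assumes "J > 0"
  shows "ens_mean J (stp H S y J v e) = ens_mean J v + (emp_cov J v ** transpose H ** Km H S J v) *v (y + ens_mean J e - H *v ens_mean J v)"
proof -
  define T where "T = emp_cov J v ** transpose H ** Km H S J v"
  have "ens_mean J (stp H S y J v e) = (1 / real J) *\<^sub>R (\<Sum>j<J. v j) + (1 / real J) *\<^sub>R (\<Sum>j<J. T *v (y + e j - H *v v j))"
    unfolding ens_mean_def stp_def T_def[symmetric] by (simp add: sum.distrib scaleR_add_right)
  also have "(1 / real J) *\<^sub>R (\<Sum>j<J. T *v (y + e j - H *v v j)) = T *v ((1 / real J) *\<^sub>R (\<Sum>j<J. (y + e j - H *v v j)))"
    by (simp add: mv_sum matrix_vector_mult_scaleR)
  also have "(1 / real J) *\<^sub>R (\<Sum>j<J. (y + e j - H *v v j)) = y + ens_mean J e - H *v ens_mean J v"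
    using assms unfolding ens_mean_def
    by (simp add: sum.distrib sum_subtractf scaleR_add_right scaleR_diff_right mv_sum[symmetric] matrix_vector_mult_scaleR
        sum_constant_scaleR del: sum_constant)
  finally show ?thesis unfolding T_def ens_mean_def by simp
qed

lemma dd_stp:
  assumes "J > 0"
  shows "dd H J (stp H S y J v e) j = dd H J v j + Cm H J v *v (Km H S J v *v ((e j - ens_mean J e) - dd H J v j))"
proof -
  define T where "T = emp_cov J v ** transpose H ** Km H S J v"
  have "stp H S y J v e j - ens_mean J (stp H S y J v e)
     = (v j - ens_mean J v) + T *v ((e j - ens_mean J e) - H *v (v j - ens_mean J v))"
    unfolding ens_mean_stp[OF assms] T_def[symmetric] unfolding stp_def T_def[symmetric]
    by (simp add: matrix_vector_mult_diff_distrib matrix_vector_right_distrib algebra_simps)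
  moreover have "H *v (T *v w) = Cm H J v *v (Km H S J v *v w)" for w
    unfolding T_def Cm_def by (simp add: matrix_vector_mul_assoc matrix_mul_assoc)
  ultimately show ?thesis unfolding dd_def by (simp add: matrix_vector_right_distrib)
qed

lemma Km_facts:
  assumes S: "sym_posdef S"
  shows "sym_posdef (Cm H J v + S)" "invertible (Cm H J v + S)" "transpose (Km H S J v) = Km H S J v"
    "psd (Km H S J v)"
proof -
  show P: "sym_posdef (Cm H J v + S)" by (rule psd_add_posdef[OF Cm_psd S])
  show "invertible (Cm H J v + S)" by (rule sym_posdef_facts(1)[OF P])
  show "transpose (Km H S J v) = Km H S J v" unfolding Km_def by (rule sym_posdef_facts(3)[OF P])
  show "psd (Km H S J v)" unfolding Km_def by (rule posdef_inv_psd[OF P])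
qed

lemma psd_sym: "psd C \<Longrightarrow> (C *v x) \<bullet> y = x \<bullet> (C *v y)"
  unfolding psd_def using sym_mv_inner by blast

lemma dd_stp_inner:
  assumes S: "sym_posdef S" and J: "J > 0"
  shows "x \<bullet> dd H J (stp H S y J v e) j = aa H S J v x j + bb H S J v x \<bullet> (e j - ens_mean J e)"
proof -
  define w where "w = (e j - ens_mean J e) - dd H J v j"
  have "x \<bullet> (Cm H J v *v (Km H S J v *v w)) = (Cm H J v *v x) \<bullet> (Km H S J v *v w)"
    by (simp add: psd_sym[OF Cm_psd])
  also have "\<dots> = bb H S J v x \<bullet> w"
    unfolding bb_def by (simp add: psd_sym[OF Km_facts(4)[OF S]])
  finally show ?thesis
    unfolding dd_stp[OF J] aa_def w_def by (simp add: inner_add_right inner_diff_left inner_diff_right)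
qed

lemma Cm_stp:
  assumes S: "sym_posdef S" and J: "J > 0"
  shows "x \<bullet> (Cm H J (stp H S y J v e) *v z) = (1 / (real J - 1)) *
     (\<Sum>j<J. (aa H S J v x j + bb H S J v x \<bullet> (e j - ens_mean J e)) * (aa H S J v z j + bb H S J v z \<bullet> (e j - ens_mean J e)))"
  unfolding Cm_form dd_stp_inner[OF S J] ..

lemma quad_identity_ens:
  assumes S: "sym_posdef S"
  shows "(x - bb H S J v x) \<bullet> (Cm H J v *v (x - bb H S J v x)) + bb H S J v x \<bullet> (S *v bb H S J v x)
      = x \<bullet> (S *v x) - (S *v x) \<bullet> (Km H S J v *v (S *v x))"
  unfolding bb_def Km_def by (rule key_identity[OF Cm_psd S])

lemma quad_parts_bound:
  assumes S: "sym_posdef S"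
  shows "(x - bb H S J v x) \<bullet> (Cm H J v *v (x - bb H S J v x)) \<le> x \<bullet> (S *v x)"
    "bb H S J v x \<bullet> (S *v bb H S J v x) \<le> x \<bullet> (S *v x)"
proof -
  have a: "0 \<le> (x - bb H S J v x) \<bullet> (Cm H J v *v (x - bb H S J v x))" using Cm_psd unfolding psd_def by blast
  have b: "0 \<le> bb H S J v x \<bullet> (S *v bb H S J v x)" using sym_posdef_facts(4)[OF S] by blast
  have c: "0 \<le> (S *v x) \<bullet> (Km H S J v *v (S *v x))" using Km_facts(4)[OF S] unfolding psd_def by blast
  show "(x - bb H S J v x) \<bullet> (Cm H J v *v (x - bb H S J v x)) \<le> x \<bullet> (S *v x)"
    "bb H S J v x \<bullet> (S *v bb H S J v x) \<le> x \<bullet> (S *v x)"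
    using quad_identity_ens[OF S, of x H J v] a b c by linarith+
qed

lemma aa_sq_bound:
  assumes S: "sym_posdef S" and J: "J \<ge> 2" and j: "j < J"
  shows "(aa H S J v x j)\<^sup>2 \<le> (real J - 1) * (x \<bullet> (S *v x))"
proof -
  define p where "p = x - bb H S J v x"
  have "(aa H S J v x j)\<^sup>2 \<le> (\<Sum>k<J. (aa H S J v x k)\<^sup>2)"
    using j by (intro member_le_sum) auto
  also have "\<dots> = (real J - 1) * (p \<bullet> (Cm H J v *v p))"
    using J unfolding Cm_form aa_def p_def by (simp add: power2_eq_square)
  also have "\<dots> \<le> (real J - 1) * (x \<bullet> (S *v x))"
    using J quad_parts_bound(1)[OF S, of x H J v] unfolding p_def by (intro mult_left_mono) auto
  finally show ?thesis .
qed

lemma bb_comp_bound: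
  assumes S: "sym_posdef S"
  shows "(bb H S J v x $ c)\<^sup>2 \<le> (x \<bullet> (S *v x)) * (matrix_inv S $ c $ c)"
proof -
  have "(bb H S J v x $ c)\<^sup>2 = (bb H S J v x \<bullet> axis c 1)\<^sup>2" by (simp add: inner_axis)
  also have "\<dots> \<le> (bb H S J v x \<bullet> (S *v bb H S J v x)) * (axis c 1 \<bullet> (matrix_inv S *v axis c 1))"
    by (rule psd_cs[OF S])
  also have "\<dots> \<le> (x \<bullet> (S *v x)) * (axis c 1 \<bullet> (matrix_inv S *v axis c 1))"
    using posdef_inv_psd[OF S] quad_parts_bound(2)[OF S] unfolding psd_def by (intro mult_right_mono) auto
  finally show ?thesis by (simp add: entry_form[symmetric])
qed

lemma dev_identity:
  fixes a Y :: "nat \<Rightarrow> real"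
  assumes J: "J > 0"
  shows "(\<Sum>j<J. (a j + (Y j - (1 / real J) * (\<Sum>k<J. Y k)))\<^sup>2)
    = (\<Sum>j<J. (a j)\<^sup>2) + 2 * (\<Sum>j<J. a j * Y j) - (2 / real J) * (\<Sum>j<J. \<Sum>k<J. a j * Y k)
      + (\<Sum>j<J. Y j * Y j) - (1 / real J) * (\<Sum>j<J. \<Sum>k<J. Y j * Y k)"
proof -
  define T where "T = (\<Sum>k<J. Y k)"
  define A where "A = (\<Sum>k<J. a k)"
  have e1: "(\<Sum>j<J. \<Sum>k<J. a j * Y k) = A * T" unfolding A_def T_def by (simp add: sum_product)
  have e2: "(\<Sum>j<J. \<Sum>k<J. Y j * Y k) = T * T" unfolding T_def by (simp add: sum_product)
  have "(\<Sum>j<J. (a j + (Y j - (1 / real J) * T))\<^sup>2)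
     = (\<Sum>j<J. ((a j)\<^sup>2 + 2 * (a j * Y j) + Y j * Y j + (T * T) / (real J * real J)) - ((2 / real J) * T * a j + (2 / real J) * T * Y j))"
    by (intro sum.cong refl) (simp add: power2_eq_square algebra_simps)
  also have "\<dots> = (\<Sum>j<J. (a j)\<^sup>2) + 2 * (\<Sum>j<J. a j * Y j) + (\<Sum>j<J. Y j * Y j) + real J * ((T * T) / (real J * real J))
      - ((2 / real J) * T * A + (2 / real J) * T * T)"
    unfolding sum_subtractf sum.distrib
    by (simp only: A_def T_def sum_distrib_left[symmetric] sum_constant card_lessThan)
  also have "\<dots> = (\<Sum>j<J. (a j)\<^sup>2) + 2 * (\<Sum>j<J. a j * Y j) - (2 / real J) * (A * T)
      + (\<Sum>j<J. Y j * Y j) - (1 / real J) * (T * T)"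
    using J by (simp add: field_simps)
  finally show ?thesis unfolding e1 e2 T_def .
qed

lemma (in prob_space) alg_main:
  fixes a :: "nat \<Rightarrow> 'a \<Rightarrow> real" and b :: "'c::finite \<Rightarrow> 'a \<Rightarrow> real"
    and x :: "nat \<Rightarrow> 'c \<Rightarrow> 'a \<Rightarrow> real" and Bf :: "'a \<Rightarrow> real"
  assumes J: "J > 0"
    and i1: "\<And>j k. j < J \<Longrightarrow> k < J \<Longrightarrow> integrable M (\<lambda>\<omega>. a j \<omega> * a k \<omega>)"
    and i2: "\<And>j k c. j < J \<Longrightarrow> k < J \<Longrightarrow> integrable M (\<lambda>\<omega>. a j \<omega> * (b c \<omega> * x k c \<omega>))"
    and i2': "\<And>j k c. j < J \<Longrightarrow> k < J \<Longrightarrow> expectation (\<lambda>\<omega>. a j \<omega> * (b c \<omega> * x k c \<omega>)) = 0"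
    and i3: "\<And>j k c e. j < J \<Longrightarrow> k < J \<Longrightarrow> integrable M (\<lambda>\<omega>. (b c \<omega> * x j c \<omega>) * (b e \<omega> * x k e \<omega>))"
    and i3': "\<And>j k c e. j < J \<Longrightarrow> k < J \<Longrightarrow> j \<noteq> k \<Longrightarrow>
       expectation (\<lambda>\<omega>. (b c \<omega> * x j c \<omega>) * (b e \<omega> * x k e \<omega>)) = 0"
    and i4: "\<And>j. j < J \<Longrightarrow> expectation (\<lambda>\<omega>. (\<Sum>c\<in>UNIV. b c \<omega> * x j c \<omega>) * (\<Sum>c\<in>UNIV. b c \<omega> * x j c \<omega>)) \<le> expectation Bf"
  shows "integrable M (\<lambda>\<omega>. \<Sum>j<J. (a j \<omega> + ((\<Sum>c\<in>UNIV. b c \<omega> * x j c \<omega>) - (1 / real J) * (\<Sum>k<J. \<Sum>c\<in>UNIV. b c \<omega> * x k c \<omega>)))\<^sup>2)"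
    "expectation (\<lambda>\<omega>. \<Sum>j<J. (a j \<omega> + ((\<Sum>c\<in>UNIV. b c \<omega> * x j c \<omega>) - (1 / real J) * (\<Sum>k<J. \<Sum>c\<in>UNIV. b c \<omega> * x k c \<omega>)))\<^sup>2)
      \<le> expectation (\<lambda>\<omega>. \<Sum>j<J. (a j \<omega>)\<^sup>2) + (real J - 1) * expectation Bf"
proof -
  define Y where "Y j \<omega> = (\<Sum>c\<in>UNIV. b c \<omega> * x j c \<omega>)" for j \<omega>
  have aY: "(\<lambda>\<omega>. a j \<omega> * Y k \<omega>) = (\<lambda>\<omega>. \<Sum>c\<in>UNIV. a j \<omega> * (b c \<omega> * x k c \<omega>))" for j k
    unfolding Y_def by (simp add: sum_distrib_left)
  have YY: "(\<lambda>\<omega>. Y j \<omega> * Y k \<omega>) = (\<lambda>\<omega>. \<Sum>c\<in>UNIV. \<Sum>e\<in>UNIV. (b c \<omega> * x j c \<omega>) * (b e \<omega> * x k e \<omega>))" for j k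
    unfolding Y_def by (simp add: sum_product)
  have IaY: "integrable M (\<lambda>\<omega>. a j \<omega> * Y k \<omega>)" if "j < J" "k < J" for j k
    unfolding aY using i2 that by auto
  have EaY: "expectation (\<lambda>\<omega>. a j \<omega> * Y k \<omega>) = 0" if "j < J" "k < J" for j k
    unfolding aY using i2 i2' that by (simp add: Bochner_Integration.integral_sum)
  have IYY: "integrable M (\<lambda>\<omega>. Y j \<omega> * Y k \<omega>)" if "j < J" "k < J" for j k
    unfolding YY using i3 that by auto
  have EYY: "expectation (\<lambda>\<omega>. Y j \<omega> * Y k \<omega>) = 0" if "j < J" "k < J" "j \<noteq> k" for j k
    unfolding YY using i3 i3' that by (simp add: Bochner_Integration.integral_sum)
  have Ia2: "integrable M (\<lambda>\<omega>. (a j \<omega>)\<^sup>2)" if "j < J" for j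
    using i1[OF that that] by (simp add: power2_eq_square)
  have pt: "(\<Sum>j<J. (a j \<omega> + ((\<Sum>c\<in>UNIV. b c \<omega> * x j c \<omega>) - (1 / real J) * (\<Sum>k<J. \<Sum>c\<in>UNIV. b c \<omega> * x k c \<omega>)))\<^sup>2)
    = (\<Sum>j<J. (a j \<omega>)\<^sup>2) + 2 * (\<Sum>j<J. a j \<omega> * Y j \<omega>) - (2 / real J) * (\<Sum>j<J. \<Sum>k<J. a j \<omega> * Y k \<omega>)
      + (\<Sum>j<J. Y j \<omega> * Y j \<omega>) - (1 / real J) * (\<Sum>j<J. \<Sum>k<J. Y j \<omega> * Y k \<omega>)" for \<omega>
    unfolding Y_def[symmetric] by (rule dev_identity[OF J])
  have I1: "integrable M (\<lambda>\<omega>. \<Sum>j<J. (a j \<omega>)\<^sup>2)" using Ia2 by auto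
  have I2: "integrable M (\<lambda>\<omega>. \<Sum>j<J. a j \<omega> * Y j \<omega>)" using IaY by auto
  have I3: "integrable M (\<lambda>\<omega>. \<Sum>j<J. \<Sum>k<J. a j \<omega> * Y k \<omega>)"
    by (intro Bochner_Integration.integrable_sum IaY) auto
  have I4: "integrable M (\<lambda>\<omega>. \<Sum>j<J. Y j \<omega> * Y j \<omega>)" using IYY by auto
  have I5: "integrable M (\<lambda>\<omega>. \<Sum>j<J. \<Sum>k<J. Y j \<omega> * Y k \<omega>)"
    by (intro Bochner_Integration.integrable_sum IYY) auto
  show "integrable M (\<lambda>\<omega>. \<Sum>j<J. (a j \<omega> + ((\<Sum>c\<in>UNIV. b c \<omega> * x j c \<omega>) - (1 / real J) * (\<Sum>k<J. \<Sum>c\<in>UNIV. b c \<omega> * x k c \<omega>)))\<^sup>2)"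
    unfolding pt using I1 I2 I3 I4 I5 by auto
  have E2: "expectation (\<lambda>\<omega>. \<Sum>j<J. a j \<omega> * Y j \<omega>) = 0"
    using IaY EaY by (simp add: Bochner_Integration.integral_sum)
  have E3: "expectation (\<lambda>\<omega>. \<Sum>j<J. \<Sum>k<J. a j \<omega> * Y k \<omega>) = 0"
  proof -
    have "expectation (\<lambda>\<omega>. \<Sum>j<J. \<Sum>k<J. a j \<omega> * Y k \<omega>) = (\<Sum>j<J. expectation (\<lambda>\<omega>. \<Sum>k<J. a j \<omega> * Y k \<omega>))"
      by (rule Bochner_Integration.integral_sum) (intro Bochner_Integration.integrable_sum IaY, auto)
    also have "\<dots> = (\<Sum>j<J. \<Sum>k<J. expectation (\<lambda>\<omega>. a j \<omega> * Y k \<omega>))"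
      by (intro sum.cong refl Bochner_Integration.integral_sum) (auto intro: IaY)
    also have "\<dots> = 0" by (simp add: EaY)
    finally show ?thesis .
  qed
  have E5: "expectation (\<lambda>\<omega>. \<Sum>j<J. \<Sum>k<J. Y j \<omega> * Y k \<omega>) = (\<Sum>j<J. expectation (\<lambda>\<omega>. Y j \<omega> * Y j \<omega>))"
  proof -
    have "expectation (\<lambda>\<omega>. \<Sum>j<J. \<Sum>k<J. Y j \<omega> * Y k \<omega>) = (\<Sum>j<J. expectation (\<lambda>\<omega>. \<Sum>k<J. Y j \<omega> * Y k \<omega>))"
      by (rule Bochner_Integration.integral_sum) (intro Bochner_Integration.integrable_sum IYY, auto)
    also have "\<dots> = (\<Sum>j<J. \<Sum>k<J. expectation (\<lambda>\<omega>. Y j \<omega> * Y k \<omega>))"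
      by (intro sum.cong refl Bochner_Integration.integral_sum) (auto intro: IYY)
    also have "\<dots> = (\<Sum>j<J. \<Sum>k<J. if k = j then expectation (\<lambda>\<omega>. Y j \<omega> * Y j \<omega>) else 0)"
      using EYY by (intro sum.cong refl) auto
    also have "\<dots> = (\<Sum>j<J. expectation (\<lambda>\<omega>. Y j \<omega> * Y j \<omega>))"
      by (simp add: sum.delta)
    finally show ?thesis .
  qed
  have E4: "expectation (\<lambda>\<omega>. \<Sum>j<J. Y j \<omega> * Y j \<omega>) = (\<Sum>j<J. expectation (\<lambda>\<omega>. Y j \<omega> * Y j \<omega>))"
    using IYY by (simp add: Bochner_Integration.integral_sum)
  have "expectation (\<lambda>\<omega>. \<Sum>j<J. (a j \<omega> + ((\<Sum>c\<in>UNIV. b c \<omega> * x j c \<omega>) - (1 / real J) * (\<Sum>k<J. \<Sum>c\<in>UNIV. b c \<omega> * x k c \<omega>)))\<^sup>2)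
     = expectation (\<lambda>\<omega>. \<Sum>j<J. (a j \<omega>)\<^sup>2) + 2 * expectation (\<lambda>\<omega>. \<Sum>j<J. a j \<omega> * Y j \<omega>)
       - (2 / real J) * expectation (\<lambda>\<omega>. \<Sum>j<J. \<Sum>k<J. a j \<omega> * Y k \<omega>)
       + expectation (\<lambda>\<omega>. \<Sum>j<J. Y j \<omega> * Y j \<omega>) - (1 / real J) * expectation (\<lambda>\<omega>. \<Sum>j<J. \<Sum>k<J. Y j \<omega> * Y k \<omega>)"
    unfolding pt using I1 I2 I3 I4 I5
    by (simp add: Bochner_Integration.integral_add Bochner_Integration.integral_diff)
  also have "\<dots> = expectation (\<lambda>\<omega>. \<Sum>j<J. (a j \<omega>)\<^sup>2) + (1 - 1 / real J) * (\<Sum>j<J. expectation (\<lambda>\<omega>. Y j \<omega> * Y j \<omega>))"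
    unfolding E2 E3 E4 E5 by (simp add: algebra_simps)
  also have "\<dots> \<le> expectation (\<lambda>\<omega>. \<Sum>j<J. (a j \<omega>)\<^sup>2) + (1 - 1 / real J) * (\<Sum>j<J. expectation Bf)"
    using J i4[unfolded Y_def[symmetric]] by (intro add_left_mono mult_left_mono sum_mono) auto
  also have "\<dots> = expectation (\<lambda>\<omega>. \<Sum>j<J. (a j \<omega>)\<^sup>2) + (real J - 1) * expectation Bf"
    using J by (simp add: field_simps)
  finally show "expectation (\<lambda>\<omega>. \<Sum>j<J. (a j \<omega> + ((\<Sum>c\<in>UNIV. b c \<omega> * x j c \<omega>) - (1 / real J) * (\<Sum>k<J. \<Sum>c\<in>UNIV. b c \<omega> * x k c \<omega>)))\<^sup>2)
      \<le> expectation (\<lambda>\<omega>. \<Sum>j<J. (a j \<omega>)\<^sup>2) + (real J - 1) * expectation Bf" .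
qed

lemma ens_cong:
  assumes "\<And>j. j < J \<Longrightarrow> v j = w j"
  shows "ens_mean J v = ens_mean J w" "emp_cov J v = emp_cov J w" "Cm H J v = Cm H J w"
    "Km H S J v = Km H S J w" "bb H S J v x = bb H S J w x"
    "j < J \<Longrightarrow> dd H J v j = dd H J w j" "j < J \<Longrightarrow> aa H S J v x j = aa H S J w x j"
proof -
  have "sum v {..<J} = sum w {..<J}" by (rule sum.cong) (auto simp: assms)
  then show m: "ens_mean J v = ens_mean J w" unfolding ens_mean_def by simp
  have "(\<Sum>j<J. outer (v j - ens_mean J w) (v j - ens_mean J w)) = (\<Sum>j<J. outer (w j - ens_mean J w) (w j - ens_mean J w))"
    by (rule sum.cong) (auto simp: assms)
  then show c: "emp_cov J v = emp_cov J w" unfolding emp_cov_def m by simp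
  show C: "Cm H J v = Cm H J w" unfolding Cm_def c ..
  show K: "Km H S J v = Km H S J w" unfolding Km_def C ..
  show b: "bb H S J v x = bb H S J w x" unfolding bb_def K C ..
  show "j < J \<Longrightarrow> dd H J v j = dd H J w j" unfolding dd_def m using assms by simp
  then show "j < J \<Longrightarrow> aa H S J v x j = aa H S J w x j" unfolding aa_def b by simp
qed

lemma eki_agree:
  assumes "\<And>k l. k < i \<Longrightarrow> l < J \<Longrightarrow> e k l = e' k l" and "j < J"
  shows "eki_ens H S y J v0 e i j = eki_ens H S y J v0 e' i j"
  using assms
proof (induction i arbitrary: j)
  case 0 then show ?case by simp
next
  case (Suc i)
  have ag: "\<And>l. l < J \<Longrightarrow> eki_ens H S y J v0 e i l = eki_ens H S y J v0 e' i l"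
    using Suc.IH Suc.prems(1) by simp
  have c1: "emp_cov J (eki_ens H S y J v0 e i) = emp_cov J (eki_ens H S y J v0 e' i)"
    by (rule ens_cong(2)[of J "eki_ens H S y J v0 e i" "eki_ens H S y J v0 e' i"]) (rule ag)
  have c2: "Km H S J (eki_ens H S y J v0 e i) = Km H S J (eki_ens H S y J v0 e' i)"
    by (rule ens_cong(4)[of J "eki_ens H S y J v0 e i" "eki_ens H S y J v0 e' i"]) (rule ag)
  show ?case unfolding eki_Suc stp_def
    using c1 c2 ag[OF Suc.prems(2)] Suc.prems(1)[of i j] Suc.prems(2) by simp
qed

section \<open>Measurability of ensemble functionals\<close>

lemma meas_ens_mean:
  assumes "\<And>j. j < J \<Longrightarrow> (\<lambda>x. f x j) \<in> borel_measurable N"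
  shows "(\<lambda>x. ens_mean J (f x)) \<in> borel_measurable N"
  unfolding ens_mean_def using assms by (intro borel_measurable_scaleR borel_measurable_const borel_measurable_sum) auto

lemma meas_emp_cov:
  fixes f :: "'x \<Rightarrow> nat \<Rightarrow> real^'d"
  assumes "\<And>j. j < J \<Longrightarrow> (\<lambda>x. f x j) \<in> borel_measurable N"
  shows "(\<lambda>x. emp_cov J (f x)) \<in> borel_measurable N"
  unfolding emp_cov_def using assms meas_ens_mean[OF assms]
  by (intro borel_measurable_scaleR borel_measurable_const borel_measurable_sum meas_outer borel_measurable_diff) auto

lemma meas_Cm:
  fixes f :: "'x \<Rightarrow> nat \<Rightarrow> real^'d"
  assumes "\<And>j. j < J \<Longrightarrow> (\<lambda>x. f x j) \<in> borel_measurable N"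
  shows "(\<lambda>x. Cm H J (f x)) \<in> borel_measurable N"
  unfolding Cm_def by (intro meas_mm meas_emp_cov[OF assms] meas_transpose borel_measurable_const)

lemma meas_Km:
  fixes f :: "'x \<Rightarrow> nat \<Rightarrow> real^'d"
  assumes "\<And>j. j < J \<Longrightarrow> (\<lambda>x. f x j) \<in> borel_measurable N" and S: "sym_posdef S"
  shows "(\<lambda>x. Km H S J (f x)) \<in> borel_measurable N"
  unfolding Km_def
  by (intro meas_matrix_inv borel_measurable_add meas_Cm[OF assms(1)] borel_measurable_const Km_facts(2)[OF S])

lemma meas_bb:
  fixes f :: "'x \<Rightarrow> nat \<Rightarrow> real^'d"
  assumes "\<And>j. j < J \<Longrightarrow> (\<lambda>x. f x j) \<in> borel_measurable N" and S: "sym_posdef S"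
  shows "(\<lambda>x. bb H S J (f x) w) \<in> borel_measurable N"
  unfolding bb_def by (intro meas_mv meas_Km[OF assms] meas_Cm[OF assms(1)] borel_measurable_const)

lemma meas_dd:
  fixes f :: "'x \<Rightarrow> nat \<Rightarrow> real^'d"
  assumes "\<And>j. j < J \<Longrightarrow> (\<lambda>x. f x j) \<in> borel_measurable N" and "j < J"
  shows "(\<lambda>x. dd H J (f x) j) \<in> borel_measurable N"
  unfolding dd_def by (intro meas_mv borel_measurable_diff meas_ens_mean[OF assms(1)] borel_measurable_const assms)

lemma meas_aa:
  fixes f :: "'x \<Rightarrow> nat \<Rightarrow> real^'d"
  assumes "\<And>j. j < J \<Longrightarrow> (\<lambda>x. f x j) \<in> borel_measurable N" and S: "sym_posdef S" and "j < J"
  shows "(\<lambda>x. aa H S J (f x) w j) \<in> borel_measurable N"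
  unfolding aa_def by (intro borel_measurable_inner borel_measurable_diff meas_bb[OF assms(1,2)] meas_dd[OF assms(1,3)] borel_measurable_const)

lemma (in prob_space) bdd_mult_int:
  fixes Z W :: "'a \<Rightarrow> real"
  assumes W: "integrable M W" and Z: "Z \<in> borel_measurable M" and B: "\<And>\<omega>. \<omega> \<in> space M \<Longrightarrow> \<bar>Z \<omega>\<bar> \<le> B"
  shows "integrable M (\<lambda>\<omega>. Z \<omega> * W \<omega>)"
proof (rule Bochner_Integration.integrable_bound[of _ "\<lambda>\<omega>. B * \<bar>W \<omega>\<bar>"])
  show "integrable M (\<lambda>\<omega>. B * \<bar>W \<omega>\<bar>)" using W by auto
  show "(\<lambda>\<omega>. Z \<omega> * W \<omega>) \<in> borel_measurable M" using W Z by measurable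
  show "AE \<omega> in M. norm (Z \<omega> * W \<omega>) \<le> norm (B * \<bar>W \<omega>\<bar>)"
  proof (intro AE_I2)
    fix \<omega> assume "\<omega> \<in> space M"
    then have b: "\<bar>Z \<omega>\<bar> \<le> B" by (rule B)
    then have "0 \<le> B" by linarith
    then show "norm (Z \<omega> * W \<omega>) \<le> norm (B * \<bar>W \<omega>\<bar>)"
      using b by (simp add: abs_mult mult_right_mono)
  qed
qed

locale eki_setup = prob_space M for M :: "'w measure" +
  fixes H :: "real^'d^'n" and S :: "real^'n^'n" and y :: "real^'n" and J :: nat
    and v0 :: "nat \<Rightarrow> real^'d" and \<epsilon> :: "nat \<Rightarrow> nat \<Rightarrow> 'w \<Rightarrow> real^'n"
  assumes S: "sym_posdef S" and J2: "J \<ge> 2"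
    and em[measurable]: "\<And>i j. \<epsilon> i j \<in> borel_measurable M"
    and ind: "indep_vars (\<lambda>_. borel) (\<lambda>p. \<epsilon> (fst p) (snd p)) {p. snd p < J}"
    and dist: "\<And>i j. j < J \<Longrightarrow> distr M borel (\<epsilon> i j) = gaussian S"
begin

definition "Ki i = {p::nat\<times>nat. fst p < i \<and> snd p < J}"
definition "RR L \<omega> = restrict (\<lambda>p. \<epsilon> (fst p) (snd p) \<omega>) L"
definition "Ens i x = eki_ens H S y J v0 (\<lambda>k l. x (k, l)) i"
definition "V i \<omega> = eki_ens H S y J v0 (\<lambda>i j. \<epsilon> i j \<omega>) i"

abbreviation "PB L \<equiv> PiM L (\<lambda>_::nat\<times>nat. (borel :: (real^'n) measure))"

lemma J0: "J > 0" using J2 by simp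

lemma V_Ens: "Ki i \<subseteq> L \<Longrightarrow> j < J \<Longrightarrow> V i \<omega> j = Ens i (RR L \<omega>) j"
  unfolding V_def Ens_def
  by (rule eki_agree) (auto simp: RR_def Ki_def subset_eq)

lemma RR_meas: "RR L \<in> measurable M (PB L)"
  unfolding RR_def by (intro measurable_restrict) simp

lemma Ens_meas: "Ki i \<subseteq> L \<Longrightarrow> j < J \<Longrightarrow> (\<lambda>x. Ens i x j) \<in> borel_measurable (PB L)"
proof (induction i arbitrary: L j)
  case 0 then show ?case unfolding Ens_def by simp
next
  case (Suc i)
  have sub: "Ki i \<subseteq> L" using Suc.prems(1) unfolding Ki_def by auto
  have IH: "\<And>l. l < J \<Longrightarrow> (\<lambda>x. Ens i x l) \<in> borel_measurable (PB L)" using Suc.IH[OF sub] .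
  have ij: "(i, j) \<in> L" using Suc.prems unfolding Ki_def by auto
  have e: "Ens (Suc i) x j = Ens i x j + (emp_cov J (Ens i x) ** transpose H ** Km H S J (Ens i x)) *v (y + x (i, j) - H *v Ens i x j)" for x
    unfolding Ens_def eki_Suc stp_def by simp
  show ?case unfolding e
    by (intro borel_measurable_add borel_measurable_diff meas_mv meas_mm meas_emp_cov meas_Km IH S Suc.prems(2)
        borel_measurable_const measurable_component_singleton[OF ij]) auto
qed

definition ensf :: "((nat \<Rightarrow> real^'d) \<Rightarrow> real) \<Rightarrow> bool" where
  "ensf g \<longleftrightarrow> (\<forall>v w. (\<forall>j<J. v j = w j) \<longrightarrow> g v = g w) \<and>
     (\<forall>L f. (\<forall>j<J. (\<lambda>x. f x j) \<in> borel_measurable (PB L)) \<longrightarrow> (\<lambda>x. g (f x)) \<in> borel_measurable (PB L))"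

lemma ensf_past:
  assumes g: "ensf g" and L: "Ki i \<subseteq> L"
  shows "g (V i \<omega>) = g (Ens i (RR L \<omega>))" "(\<lambda>x. g (Ens i x)) \<in> borel_measurable (PB L)"
proof -
  show "g (V i \<omega>) = g (Ens i (RR L \<omega>))" using g V_Ens[OF L] unfolding ensf_def by blast
  show "(\<lambda>x. g (Ens i x)) \<in> borel_measurable (PB L)" using g Ens_meas[OF L] unfolding ensf_def by blast
qed

lemma ensf_meas: "ensf g \<Longrightarrow> (\<lambda>\<omega>. g (V i \<omega>)) \<in> borel_measurable M"
  using ensf_past[of g i "Ki i"] measurable_comp[OF RR_meas, of "\<lambda>x. g (Ens i x)" "Ki i"]
  by (simp add: comp_def)

lemma ensfI:
  assumes "\<And>v w. (\<And>j. j < J \<Longrightarrow> v j = w j) \<Longrightarrow> g v = g w"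
    and "\<And>L f. (\<And>j. j < J \<Longrightarrow> (\<lambda>x. f x j) \<in> borel_measurable (PB L)) \<Longrightarrow> (\<lambda>x. g (f x)) \<in> borel_measurable (PB L)"
  shows "ensf g"
  unfolding ensf_def using assms by blast

lemma ensfD:
  assumes "ensf g"
  shows "\<And>v w. (\<And>j. j < J \<Longrightarrow> v j = w j) \<Longrightarrow> g v = g w"
    and "\<And>L f. (\<And>j. j < J \<Longrightarrow> (\<lambda>x. f x j) \<in> borel_measurable (PB L)) \<Longrightarrow> (\<lambda>x. g (f x)) \<in> borel_measurable (PB L)"
  using assms unfolding ensf_def by blast+

lemma ensf_mult: "ensf g \<Longrightarrow> ensf h \<Longrightarrow> ensf (\<lambda>v. g v * h v)"
proof (rule ensfI)
  fix v w :: "nat \<Rightarrow> real^'d" assume "ensf g" "ensf h" "\<And>j. j < J \<Longrightarrow> v j = w j"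
  then show "g v * h v = g w * h w" using ensfD(1) by metis
next
  fix L and f :: "(nat\<times>nat \<Rightarrow> real^'n) \<Rightarrow> nat \<Rightarrow> real^'d"
  assume "ensf g" "ensf h" "\<And>j. j < J \<Longrightarrow> (\<lambda>x. f x j) \<in> borel_measurable (PB L)"
  then show "(\<lambda>x. g (f x) * h (f x)) \<in> borel_measurable (PB L)"
    by (intro borel_measurable_times ensfD(2)) auto
qed

lemma ensf_aa: "j < J \<Longrightarrow> ensf (\<lambda>v. aa H S J v w j)"
proof (rule ensfI)
  fix v v' :: "nat \<Rightarrow> real^'d" assume "j < J" "\<And>j. j < J \<Longrightarrow> v j = v' j"
  then show "aa H S J v w j = aa H S J v' w j" by (rule ens_cong(7)[rotated])
next
  fix L and f :: "(nat\<times>nat \<Rightarrow> real^'n) \<Rightarrow> nat \<Rightarrow> real^'d"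
  assume "j < J" "\<And>j. j < J \<Longrightarrow> (\<lambda>x. f x j) \<in> borel_measurable (PB L)"
  then show "(\<lambda>x. aa H S J (f x) w j) \<in> borel_measurable (PB L)"
    by (intro meas_aa S)
qed

lemma ensf_bb: "ensf (\<lambda>v. bb H S J v w $ c)"
proof (rule ensfI)
  fix v v' :: "nat \<Rightarrow> real^'d" assume "\<And>j. j < J \<Longrightarrow> v j = v' j"
  then show "bb H S J v w $ c = bb H S J v' w $ c" using ens_cong(5) by metis
next
  fix L and f :: "(nat\<times>nat \<Rightarrow> real^'n) \<Rightarrow> nat \<Rightarrow> real^'d"
  assume "\<And>j. j < J \<Longrightarrow> (\<lambda>x. f x j) \<in> borel_measurable (PB L)"
  then show "(\<lambda>x. bb H S J (f x) w $ c) \<in> borel_measurable (PB L)"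
    by (intro meas_vec_nth meas_bb S)
qed

lemma ensf_quadK: "ensf (\<lambda>v. z \<bullet> (Km H S J v *v z))"
proof (rule ensfI)
  fix v v' :: "nat \<Rightarrow> real^'d" assume "\<And>j. j < J \<Longrightarrow> v j = v' j"
  then show "z \<bullet> (Km H S J v *v z) = z \<bullet> (Km H S J v' *v z)" using ens_cong(4) by metis
next
  fix L and f :: "(nat\<times>nat \<Rightarrow> real^'n) \<Rightarrow> nat \<Rightarrow> real^'d"
  assume "\<And>j. j < J \<Longrightarrow> (\<lambda>x. f x j) \<in> borel_measurable (PB L)"
  then show "(\<lambda>x. z \<bullet> (Km H S J (f x) *v z)) \<in> borel_measurable (PB L)"
    by (intro borel_measurable_inner meas_mv meas_Km S borel_measurable_const)
qed

lemma ensf_quadS: "ensf (\<lambda>v. bb H S J v w \<bullet> (S *v bb H S J v w))"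
proof (rule ensfI)
  fix v v' :: "nat \<Rightarrow> real^'d" assume "\<And>j. j < J \<Longrightarrow> v j = v' j"
  then show "bb H S J v w \<bullet> (S *v bb H S J v w) = bb H S J v' w \<bullet> (S *v bb H S J v' w)" using ens_cong(5) by metis
next
  fix L and f :: "(nat\<times>nat \<Rightarrow> real^'n) \<Rightarrow> nat \<Rightarrow> real^'d"
  assume "\<And>j. j < J \<Longrightarrow> (\<lambda>x. f x j) \<in> borel_measurable (PB L)"
  then show "(\<lambda>x. bb H S J (f x) w \<bullet> (S *v bb H S J (f x) w)) \<in> borel_measurable (PB L)"
    by (intro borel_measurable_inner meas_mv meas_bb S borel_measurable_const)
qed

lemma ensf_Cm: "ensf (\<lambda>v. z \<bullet> (Cm H J v *v z))"
proof (rule ensfI)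
  fix v v' :: "nat \<Rightarrow> real^'d" assume "\<And>j. j < J \<Longrightarrow> v j = v' j"
  then show "z \<bullet> (Cm H J v *v z) = z \<bullet> (Cm H J v' *v z)" using ens_cong(3) by metis
next
  fix L and f :: "(nat\<times>nat \<Rightarrow> real^'n) \<Rightarrow> nat \<Rightarrow> real^'d"
  assume "\<And>j. j < J \<Longrightarrow> (\<lambda>x. f x j) \<in> borel_measurable (PB L)"
  then show "(\<lambda>x. z \<bullet> (Cm H J (f x) *v z)) \<in> borel_measurable (PB L)"
    by (intro borel_measurable_inner meas_mv meas_Cm borel_measurable_const)
qed

end

context eki_setup begin

lemma indep_fact:
  fixes f g :: "(nat\<times>nat \<Rightarrow> real^'n) \<Rightarrow> real"
  assumes AB: "A \<inter> B = {}" "A \<subseteq> {p. snd p < J}" "B \<subseteq> {p. snd p < J}"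
    and f: "f \<in> borel_measurable (PB A)" and g: "g \<in> borel_measurable (PB B)"
    and fi: "integrable M (\<lambda>\<omega>. f (RR A \<omega>))" and gi: "integrable M (\<lambda>\<omega>. g (RR B \<omega>))"
  shows "integrable M (\<lambda>\<omega>. f (RR A \<omega>) * g (RR B \<omega>))"
    "expectation (\<lambda>\<omega>. f (RR A \<omega>) * g (RR B \<omega>)) = expectation (\<lambda>\<omega>. f (RR A \<omega>)) * expectation (\<lambda>\<omega>. g (RR B \<omega>))"
proof -
  have "indep_var (PB A) (RR A) (PB B) (RR B)"
    unfolding RR_def using indep_var_restrict[OF ind AB] by simp
  then have iv: "indep_var borel (f \<circ> RR A) borel (g \<circ> RR B)" by (rule indep_var_compose[OF _ f g])
  have fi': "integrable M (f \<circ> RR A)" and gi': "integrable M (g \<circ> RR B)" using fi gi by (simp_all add: comp_def)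
  show "integrable M (\<lambda>\<omega>. f (RR A \<omega>) * g (RR B \<omega>))"
    using indep_var_integrable[OF iv fi' gi'] by (simp add: comp_def)
  show "expectation (\<lambda>\<omega>. f (RR A \<omega>) * g (RR B \<omega>)) = expectation (\<lambda>\<omega>. f (RR A \<omega>)) * expectation (\<lambda>\<omega>. g (RR B \<omega>))"
    using indep_var_lebesgue_integral[OF iv fi' gi'] by (simp add: comp_def)
qed

lemma eps_gauss:
  assumes "j < J"
  shows "integrable M (\<lambda>\<omega>. (u \<bullet> \<epsilon> i j \<omega>)\<^sup>2)" "integrable M (\<lambda>\<omega>. u \<bullet> \<epsilon> i j \<omega>)"
    "expectation (\<lambda>\<omega>. u \<bullet> \<epsilon> i j \<omega>) = 0" "expectation (\<lambda>\<omega>. (u \<bullet> \<epsilon> i j \<omega>)\<^sup>2) \<le> u \<bullet> (S *v u)"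
  using gauss_moments[OF S prob_space_axioms em dist[OF assms]] by auto

lemma eps_comp:
  assumes "j < J"
  shows "integrable M (\<lambda>\<omega>. \<epsilon> i j \<omega> $ c)" "expectation (\<lambda>\<omega>. \<epsilon> i j \<omega> $ c) = 0"
    "integrable M (\<lambda>\<omega>. (\<epsilon> i j \<omega> $ c)\<^sup>2)"
  using eps_gauss[OF assms, of "axis c 1"] by (simp_all add: inner_axis')

lemma eps_prod_int:
  assumes "j < J" "k < J"
  shows "integrable M (\<lambda>\<omega>. \<epsilon> i j \<omega> $ c * \<epsilon> i k \<omega> $ e)"
proof (rule Bochner_Integration.integrable_bound[of _ "\<lambda>\<omega>. (\<epsilon> i j \<omega> $ c)\<^sup>2 + (\<epsilon> i k \<omega> $ e)\<^sup>2"])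
  show "integrable M (\<lambda>\<omega>. (\<epsilon> i j \<omega> $ c)\<^sup>2 + (\<epsilon> i k \<omega> $ e)\<^sup>2)"
    using eps_comp(3)[OF assms(1)] eps_comp(3)[OF assms(2)] by auto
  show "(\<lambda>\<omega>. \<epsilon> i j \<omega> $ c * \<epsilon> i k \<omega> $ e) \<in> borel_measurable M" by measurable
  show "AE \<omega> in M. norm (\<epsilon> i j \<omega> $ c * \<epsilon> i k \<omega> $ e) \<le> norm ((\<epsilon> i j \<omega> $ c)\<^sup>2 + (\<epsilon> i k \<omega> $ e)\<^sup>2)"
  proof (intro AE_I2)
    fix \<omega>
    have "\<bar>a * b\<bar> \<le> a\<^sup>2 + b\<^sup>2" for a b :: real
      using sum_squares_bound[of a b] sum_squares_bound[of a "-b"] by (simp add: abs_if)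
    then show "norm (\<epsilon> i j \<omega> $ c * \<epsilon> i k \<omega> $ e) \<le> norm ((\<epsilon> i j \<omega> $ c)\<^sup>2 + (\<epsilon> i k \<omega> $ e)\<^sup>2)"
      by simp
  qed
qed

lemma Ki_sub: "Ki i \<subseteq> {p. snd p < J}" unfolding Ki_def by auto

lemma past_int:
  assumes g: "ensf g" and B: "\<And>v. \<bar>g v\<bar> \<le> B"
  shows "integrable M (\<lambda>\<omega>. g (V i \<omega>))"
  by (rule integrable_const_bound[where B=B]) (auto simp: B intro: ensf_meas[OF g])

lemma E1:
  assumes g: "ensf g" and B: "\<And>v. \<bar>g v\<bar> \<le> B" and j: "j < J"
  shows "integrable M (\<lambda>\<omega>. g (V i \<omega>) * \<epsilon> i j \<omega> $ c)" "expectation (\<lambda>\<omega>. g (V i \<omega>) * \<epsilon> i j \<omega> $ c) = 0"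
proof -
  define A where "A = Ki i"
  define Bs where "Bs = {(i, j)}"
  have AB: "A \<inter> Bs = {}" "A \<subseteq> {p. snd p < J}" "Bs \<subseteq> {p. snd p < J}"
    using j Ki_sub unfolding A_def Bs_def Ki_def by auto
  have ij: "(i, j) \<in> Bs" unfolding Bs_def by simp
  have f: "(\<lambda>x. g (Ens i x)) \<in> borel_measurable (PB A)" using ensf_past(2)[OF g] unfolding A_def by simp
  have gg: "(\<lambda>x. x (i, j) $ c) \<in> borel_measurable (PB Bs)"
    by (intro meas_vec_nth measurable_component_singleton[OF ij])
  have e1: "g (Ens i (RR A \<omega>)) = g (V i \<omega>)" for \<omega>
    using ensf_past(1)[OF g subset_refl] unfolding A_def by simp
  have e2: "RR Bs \<omega> (i, j) $ c = \<epsilon> i j \<omega> $ c" for \<omega> unfolding RR_def Bs_def by simp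
  have fi: "integrable M (\<lambda>\<omega>. g (Ens i (RR A \<omega>)))" unfolding e1 by (rule past_int[OF g B])
  have gi: "integrable M (\<lambda>\<omega>. RR Bs \<omega> (i, j) $ c)" unfolding e2 by (rule eps_comp(1)[OF j])
  note r = indep_fact[OF AB f gg fi gi, simplified e1 e2]
  show "integrable M (\<lambda>\<omega>. g (V i \<omega>) * \<epsilon> i j \<omega> $ c)" by (rule r(1))
  show "expectation (\<lambda>\<omega>. g (V i \<omega>) * \<epsilon> i j \<omega> $ c) = 0" using r(2) eps_comp(2)[OF j] by simp
qed

lemma E2:
  assumes g: "ensf g" and B: "\<And>v. \<bar>g v\<bar> \<le> B" and j: "j < J" and k: "k < J" and jk: "j \<noteq> k"
  shows "integrable M (\<lambda>\<omega>. g (V i \<omega>) * \<epsilon> i j \<omega> $ c * \<epsilon> i k \<omega> $ e)"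
    "expectation (\<lambda>\<omega>. g (V i \<omega>) * \<epsilon> i j \<omega> $ c * \<epsilon> i k \<omega> $ e) = 0"
proof -
  define A where "A = Ki i \<union> {(i, j)}"
  define Bs where "Bs = {(i, k)}"
  have AB: "A \<inter> Bs = {}" "A \<subseteq> {p. snd p < J}" "Bs \<subseteq> {p. snd p < J}"
    using j k jk Ki_sub unfolding A_def Bs_def Ki_def by auto
  have ij: "(i, j) \<in> A" and ik: "(i, k) \<in> Bs" unfolding A_def Bs_def by simp_all
  have sub: "Ki i \<subseteq> A" unfolding A_def by auto
  have f: "(\<lambda>x. g (Ens i x) * x (i, j) $ c) \<in> borel_measurable (PB A)"
    using ensf_past(2)[OF g sub] by (intro borel_measurable_times meas_vec_nth measurable_component_singleton[OF ij])
  have gg: "(\<lambda>x. x (i, k) $ e) \<in> borel_measurable (PB Bs)"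
    by (intro meas_vec_nth measurable_component_singleton[OF ik])
  have e1: "g (Ens i (RR A \<omega>)) * RR A \<omega> (i, j) $ c = g (V i \<omega>) * \<epsilon> i j \<omega> $ c" for \<omega>
    using ensf_past(1)[OF g sub] ij unfolding RR_def by simp
  have e2: "RR Bs \<omega> (i, k) $ e = \<epsilon> i k \<omega> $ e" for \<omega> unfolding RR_def Bs_def by simp
  have fi: "integrable M (\<lambda>\<omega>. g (Ens i (RR A \<omega>)) * RR A \<omega> (i, j) $ c)" unfolding e1 by (rule E1(1)[OF g B j])
  have gi: "integrable M (\<lambda>\<omega>. RR Bs \<omega> (i, k) $ e)" unfolding e2 by (rule eps_comp(1)[OF k])
  note r = indep_fact[OF AB f gg fi gi, simplified e1 e2]
  show "integrable M (\<lambda>\<omega>. g (V i \<omega>) * \<epsilon> i j \<omega> $ c * \<epsilon> i k \<omega> $ e)" by (rule r(1))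
  show "expectation (\<lambda>\<omega>. g (V i \<omega>) * \<epsilon> i j \<omega> $ c * \<epsilon> i k \<omega> $ e) = 0" using r(2) eps_comp(2)[OF k] by simp
qed

lemma E3:
  assumes g: "ensf g" and B: "\<And>v. \<bar>g v\<bar> \<le> B" and j: "j < J"
  shows "integrable M (\<lambda>\<omega>. g (V i \<omega>) * (\<epsilon> i j \<omega> $ c * \<epsilon> i j \<omega> $ e))"
    "expectation (\<lambda>\<omega>. g (V i \<omega>) * (\<epsilon> i j \<omega> $ c * \<epsilon> i j \<omega> $ e))
       = expectation (\<lambda>\<omega>. g (V i \<omega>)) * expectation (\<lambda>\<omega>. \<epsilon> i j \<omega> $ c * \<epsilon> i j \<omega> $ e)"
proof -
  define A where "A = Ki i"
  define Bs where "Bs = {(i, j)}"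
  have AB: "A \<inter> Bs = {}" "A \<subseteq> {p. snd p < J}" "Bs \<subseteq> {p. snd p < J}"
    using j Ki_sub unfolding A_def Bs_def Ki_def by auto
  have ij: "(i, j) \<in> Bs" unfolding Bs_def by simp
  have f: "(\<lambda>x. g (Ens i x)) \<in> borel_measurable (PB A)" using ensf_past(2)[OF g] unfolding A_def by simp
  have gg: "(\<lambda>x. x (i, j) $ c * x (i, j) $ e) \<in> borel_measurable (PB Bs)"
    by (intro borel_measurable_times meas_vec_nth measurable_component_singleton[OF ij])
  have e1: "g (Ens i (RR A \<omega>)) = g (V i \<omega>)" for \<omega>
    using ensf_past(1)[OF g subset_refl] unfolding A_def by simp
  have e2: "RR Bs \<omega> (i, j) $ c * RR Bs \<omega> (i, j) $ e = \<epsilon> i j \<omega> $ c * \<epsilon> i j \<omega> $ e" for \<omega>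
    unfolding RR_def Bs_def by simp
  have fi: "integrable M (\<lambda>\<omega>. g (Ens i (RR A \<omega>)))" unfolding e1 by (rule past_int[OF g B])
  have gi: "integrable M (\<lambda>\<omega>. RR Bs \<omega> (i, j) $ c * RR Bs \<omega> (i, j) $ e)" unfolding e2 by (rule eps_prod_int[OF j j])
  note r = indep_fact[OF AB f gg fi gi, simplified e1 e2]
  show "integrable M (\<lambda>\<omega>. g (V i \<omega>) * (\<epsilon> i j \<omega> $ c * \<epsilon> i j \<omega> $ e))" by (rule r(1))
  show "expectation (\<lambda>\<omega>. g (V i \<omega>) * (\<epsilon> i j \<omega> $ c * \<epsilon> i j \<omega> $ e))
       = expectation (\<lambda>\<omega>. g (V i \<omega>)) * expectation (\<lambda>\<omega>. \<epsilon> i j \<omega> $ c * \<epsilon> i j \<omega> $ e)" by (rule r(2))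
qed

end

lemma abs_le_sqrt_of_sq: "a\<^sup>2 \<le> X \<Longrightarrow> \<bar>a::real\<bar> \<le> sqrt X"
  using real_sqrt_le_mono[of "a\<^sup>2" X] by simp

context eki_setup begin

lemma aa_abs: "j < J \<Longrightarrow> \<bar>aa H S J v w j\<bar> \<le> sqrt ((real J - 1) * (w \<bullet> (S *v w)))"
  by (rule abs_le_sqrt_of_sq[OF aa_sq_bound[OF S J2]])

lemma bb_abs: "\<bar>bb H S J v w $ c\<bar> \<le> sqrt ((w \<bullet> (S *v w)) * (matrix_inv S $ c $ c))"
  by (rule abs_le_sqrt_of_sq[OF bb_comp_bound[OF S]])

lemma abs_mult_le: "\<bar>p\<bar> \<le> B1 \<Longrightarrow> \<bar>q\<bar> \<le> B2 \<Longrightarrow> \<bar>(p::real) * q\<bar> \<le> B1 * B2"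
  by (simp add: abs_mult mult_mono')

lemma V_Suc: "V (Suc i) \<omega> = stp H S y J (V i \<omega>) (\<lambda>j. \<epsilon> i j \<omega>)"
  unfolding V_def eki_Suc ..

lemma quad_m:
  assumes j: "j < J"
  shows "(\<Sum>c\<in>UNIV. \<Sum>e\<in>UNIV. \<beta> $ c * \<beta> $ e * expectation (\<lambda>\<omega>. \<epsilon> i j \<omega> $ c * \<epsilon> i j \<omega> $ e))
     = expectation (\<lambda>\<omega>. (\<beta> \<bullet> \<epsilon> i j \<omega>)\<^sup>2)"
proof -
  have "(\<lambda>\<omega>. (\<beta> \<bullet> \<epsilon> i j \<omega>)\<^sup>2) = (\<lambda>\<omega>. \<Sum>c\<in>UNIV. \<Sum>e\<in>UNIV. \<beta> $ c * \<beta> $ e * (\<epsilon> i j \<omega> $ c * \<epsilon> i j \<omega> $ e))"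
    unfolding inner_vec_def power2_eq_square by (simp add: sum_product mult_ac)
  moreover have "expectation (\<lambda>\<omega>. \<Sum>c\<in>UNIV. \<Sum>e\<in>UNIV. \<beta> $ c * \<beta> $ e * (\<epsilon> i j \<omega> $ c * \<epsilon> i j \<omega> $ e))
     = (\<Sum>c\<in>UNIV. \<Sum>e\<in>UNIV. \<beta> $ c * \<beta> $ e * expectation (\<lambda>\<omega>. \<epsilon> i j \<omega> $ c * \<epsilon> i j \<omega> $ e))"
    using eps_prod_int[OF j j] by (simp add: Bochner_Integration.integral_sum)
  ultimately show ?thesis by simp
qed

lemma step_quad:
  shows "integrable M (\<lambda>\<omega>. w \<bullet> (Cm H J (V (Suc i) \<omega>) *v w))"
    "expectation (\<lambda>\<omega>. w \<bullet> (Cm H J (V (Suc i) \<omega>) *v w))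
       \<le> w \<bullet> (S *v w) - expectation (\<lambda>\<omega>. (S *v w) \<bullet> (Km H S J (V i \<omega>) *v (S *v w)))"
proof -
  define a where "a j \<omega> = aa H S J (V i \<omega>) w j" for j \<omega>
  define b where "b c \<omega> = bb H S J (V i \<omega>) w $ c" for c \<omega>
  define x where "x j c \<omega> = \<epsilon> i j \<omega> $ c" for j c \<omega>
  define Bf where "Bf \<omega> = bb H S J (V i \<omega>) w \<bullet> (S *v bb H S J (V i \<omega>) w)" for \<omega>
  define Ba where "Ba = sqrt ((real J - 1) * (w \<bullet> (S *v w)))"
  define Bb where "Bb c = sqrt ((w \<bullet> (S *v w)) * (matrix_inv S $ c $ c))" for c
  have ab: "\<bar>aa H S J v w j\<bar> \<le> Ba" if "j < J" for j v unfolding Ba_def by (rule aa_abs[OF that])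
  have bb': "\<bar>bb H S J v w $ c\<bar> \<le> Bb c" for c v unfolding Bb_def by (rule bb_abs)
  have sw: "0 \<le> w \<bullet> (S *v w)" using sym_posdef_facts(4)[OF S] .
  have Yform: "bb H S J (V i \<omega>) w \<bullet> (\<epsilon> i j \<omega> - ens_mean J (\<lambda>l. \<epsilon> i l \<omega>))
     = (\<Sum>c\<in>UNIV. b c \<omega> * x j c \<omega>) - (1 / real J) * (\<Sum>k<J. \<Sum>c\<in>UNIV. b c \<omega> * x k c \<omega>)" for \<omega> j
  proof -
    have iv: "bb H S J (V i \<omega>) w \<bullet> u = (\<Sum>c\<in>UNIV. bb H S J (V i \<omega>) w $ c * u $ c)" for u :: "real^'n"
      by (simp add: inner_vec_def)
    have "bb H S J (V i \<omega>) w \<bullet> (\<epsilon> i j \<omega> - ens_mean J (\<lambda>l. \<epsilon> i l \<omega>))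
       = bb H S J (V i \<omega>) w \<bullet> \<epsilon> i j \<omega> - (1 / real J) * (\<Sum>k<J. bb H S J (V i \<omega>) w \<bullet> \<epsilon> i k \<omega>)"
      unfolding inner_diff_right ens_mean_def inner_scaleR_right inner_sum_right ..
    then show ?thesis unfolding iv b_def x_def .
  qed
  have Qform: "w \<bullet> (Cm H J (V (Suc i) \<omega>) *v w) = (1 / (real J - 1)) *
     (\<Sum>j<J. (a j \<omega> + ((\<Sum>c\<in>UNIV. b c \<omega> * x j c \<omega>) - (1 / real J) * (\<Sum>k<J. \<Sum>c\<in>UNIV. b c \<omega> * x k c \<omega>)))\<^sup>2)" for \<omega>
    unfolding V_Suc Cm_stp[OF S J0] Yform a_def[symmetric] by (simp add: power2_eq_square)
  have i1: "integrable M (\<lambda>\<omega>. a j \<omega> * a k \<omega>)" if "j < J" "k < J" for j k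
    unfolding a_def
    by (rule past_int[OF ensf_mult[OF ensf_aa[OF that(1)] ensf_aa[OF that(2)]]])
       (rule abs_mult_le[OF ab[OF that(1)] ab[OF that(2)]])
  have i2: "integrable M (\<lambda>\<omega>. a j \<omega> * (b c \<omega> * x k c \<omega>))"
    "expectation (\<lambda>\<omega>. a j \<omega> * (b c \<omega> * x k c \<omega>)) = 0" if "j < J" "k < J" for j k c
  proof -
    have e: "(\<lambda>\<omega>. a j \<omega> * (b c \<omega> * x k c \<omega>)) = (\<lambda>\<omega>. (aa H S J (V i \<omega>) w j * bb H S J (V i \<omega>) w $ c) * \<epsilon> i k \<omega> $ c)"
      unfolding a_def b_def x_def by (simp add: mult_ac)
    note E = E1[OF ensf_mult[OF ensf_aa[OF that(1)] ensf_bb] abs_mult_le[OF ab[OF that(1)] bb'] that(2)]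
    show "integrable M (\<lambda>\<omega>. a j \<omega> * (b c \<omega> * x k c \<omega>))" unfolding e by (rule E(1))
    show "expectation (\<lambda>\<omega>. a j \<omega> * (b c \<omega> * x k c \<omega>)) = 0" unfolding e by (rule E(2))
  qed
  have i3: "integrable M (\<lambda>\<omega>. (b c \<omega> * x j c \<omega>) * (b e \<omega> * x k e \<omega>))" if "j < J" "k < J" for j k c e
  proof -
    note g = ensf_mult[OF ensf_bb ensf_bb]
    note gB = abs_mult_le[OF bb'[of _ c] bb'[of _ e]]
    show ?thesis
    proof (cases "j = k")
      case True
      have e: "(\<lambda>\<omega>. (b c \<omega> * x j c \<omega>) * (b e \<omega> * x k e \<omega>)) = (\<lambda>\<omega>. (bb H S J (V i \<omega>) w $ c * bb H S J (V i \<omega>) w $ e) * (\<epsilon> i j \<omega> $ c * \<epsilon> i j \<omega> $ e))"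
        unfolding b_def x_def True by (simp add: mult_ac)
      show ?thesis unfolding e by (rule E3(1)[OF g gB that(1)])
    next
      case False
      have e: "(\<lambda>\<omega>. (b c \<omega> * x j c \<omega>) * (b e \<omega> * x k e \<omega>)) = (\<lambda>\<omega>. (bb H S J (V i \<omega>) w $ c * bb H S J (V i \<omega>) w $ e) * \<epsilon> i j \<omega> $ c * \<epsilon> i k \<omega> $ e)"
        unfolding b_def x_def by (simp add: mult_ac)
      show ?thesis unfolding e by (rule E2(1)[OF g gB that False])
    qed
  qed
  have i3': "expectation (\<lambda>\<omega>. (b c \<omega> * x j c \<omega>) * (b e \<omega> * x k e \<omega>)) = 0" if "j < J" "k < J" "j \<noteq> k" for j k c e
  proof -
    note g = ensf_mult[OF ensf_bb ensf_bb]
    note gB = abs_mult_le[OF bb'[of _ c] bb'[of _ e]]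
    have e: "(\<lambda>\<omega>. (b c \<omega> * x j c \<omega>) * (b e \<omega> * x k e \<omega>)) = (\<lambda>\<omega>. (bb H S J (V i \<omega>) w $ c * bb H S J (V i \<omega>) w $ e) * \<epsilon> i j \<omega> $ c * \<epsilon> i k \<omega> $ e)"
      unfolding b_def x_def by (simp add: mult_ac)
    show ?thesis unfolding e by (rule E2(2)[OF g gB that])
  qed
  have BfI: "integrable M Bf"
  proof -
    have "\<bar>bb H S J v w \<bullet> (S *v bb H S J v w)\<bar> \<le> w \<bullet> (S *v w)" for v
    proof -
      have "bb H S J v w \<bullet> (S *v bb H S J v w) \<le> w \<bullet> (S *v w)" by (rule quad_parts_bound(2)[OF S])
      moreover have "0 \<le> bb H S J v w \<bullet> (S *v bb H S J v w)" by (rule sym_posdef_facts(4)[OF S])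
      ultimately show ?thesis by simp
    qed
    then show ?thesis unfolding Bf_def by (rule past_int[OF ensf_quadS])
  qed
  have i4: "expectation (\<lambda>\<omega>. (\<Sum>c\<in>UNIV. b c \<omega> * x j c \<omega>) * (\<Sum>c\<in>UNIV. b c \<omega> * x j c \<omega>)) \<le> expectation Bf" if j: "j < J" for j
  proof -
    define m where "m c e = expectation (\<lambda>\<omega>. \<epsilon> i j \<omega> $ c * \<epsilon> i j \<omega> $ e)" for c e
    have gI: "\<And>c e. integrable M (\<lambda>\<omega>. bb H S J (V i \<omega>) w $ c * bb H S J (V i \<omega>) w $ e)"
      by (rule past_int[OF ensf_mult[OF ensf_bb ensf_bb] abs_mult_le[OF bb' bb']])
    have "(\<lambda>\<omega>. (\<Sum>c\<in>UNIV. b c \<omega> * x j c \<omega>) * (\<Sum>c\<in>UNIV. b c \<omega> * x j c \<omega>))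
       = (\<lambda>\<omega>. \<Sum>c\<in>UNIV. \<Sum>e\<in>UNIV. (bb H S J (V i \<omega>) w $ c * bb H S J (V i \<omega>) w $ e) * (\<epsilon> i j \<omega> $ c * \<epsilon> i j \<omega> $ e))"
      unfolding b_def x_def by (simp add: sum_product mult_ac)
    then have "expectation (\<lambda>\<omega>. (\<Sum>c\<in>UNIV. b c \<omega> * x j c \<omega>) * (\<Sum>c\<in>UNIV. b c \<omega> * x j c \<omega>))
       = (\<Sum>c\<in>UNIV. \<Sum>e\<in>UNIV. expectation (\<lambda>\<omega>. bb H S J (V i \<omega>) w $ c * bb H S J (V i \<omega>) w $ e) * m c e)"
      using E3[OF ensf_mult[OF ensf_bb ensf_bb] abs_mult_le[OF bb' bb'] j]
      by (simp add: Bochner_Integration.integral_sum m_def)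
    also have "\<dots> = expectation (\<lambda>\<omega>. \<Sum>c\<in>UNIV. \<Sum>e\<in>UNIV. bb H S J (V i \<omega>) w $ c * bb H S J (V i \<omega>) w $ e * m c e)"
      using gI by (simp add: Bochner_Integration.integral_sum)
    also have "\<dots> \<le> expectation Bf"
    proof (rule integral_mono)
      show "integrable M (\<lambda>\<omega>. \<Sum>c\<in>UNIV. \<Sum>e\<in>UNIV. bb H S J (V i \<omega>) w $ c * bb H S J (V i \<omega>) w $ e * m c e)"
        using gI by auto
      show "integrable M Bf" by (rule BfI)
      fix \<omega>
      show "(\<Sum>c\<in>UNIV. \<Sum>e\<in>UNIV. bb H S J (V i \<omega>) w $ c * bb H S J (V i \<omega>) w $ e * m c e) \<le> Bf \<omega>"
        unfolding m_def Bf_def quad_m[OF j] by (rule eps_gauss(4)[OF j])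
    qed
    finally show ?thesis .
  qed
  note alg = alg_main[OF J0 i1 i2 i3 i3' i4]
  show QI: "integrable M (\<lambda>\<omega>. w \<bullet> (Cm H J (V (Suc i) \<omega>) *v w))"
    unfolding Qform using alg(1) by simp
  have aI: "integrable M (\<lambda>\<omega>. \<Sum>j<J. (a j \<omega>)\<^sup>2)"
    using i1 by (auto simp: power2_eq_square)
  have KI: "integrable M (\<lambda>\<omega>. (S *v w) \<bullet> (Km H S J (V i \<omega>) *v (S *v w)))"
  proof -
    have "\<bar>(S *v w) \<bullet> (Km H S J v *v (S *v w))\<bar> \<le> w \<bullet> (S *v w)" for v
    proof -
      have "0 \<le> (S *v w) \<bullet> (Km H S J v *v (S *v w))" using Km_facts(4)[OF S] unfolding psd_def by blast
      moreover have "0 \<le> (w - bb H S J v w) \<bullet> (Cm H J v *v (w - bb H S J v w))" using Cm_psd unfolding psd_def by blast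
      moreover have "0 \<le> bb H S J v w \<bullet> (S *v bb H S J v w)" using sym_posdef_facts(4)[OF S] .
      moreover have "(w - bb H S J v w) \<bullet> (Cm H J v *v (w - bb H S J v w)) + bb H S J v w \<bullet> (S *v bb H S J v w)
      = w \<bullet> (S *v w) - (S *v w) \<bullet> (Km H S J v *v (S *v w))" by (rule quad_identity_ens[OF S])
      ultimately show ?thesis by linarith
    qed
    then show ?thesis by (rule past_int[OF ensf_quadK])
  qed
  have pt: "(1 / (real J - 1)) * (\<Sum>j<J. (a j \<omega>)\<^sup>2) + Bf \<omega> = w \<bullet> (S *v w) - (S *v w) \<bullet> (Km H S J (V i \<omega>) *v (S *v w))" for \<omega>
  proof -
    have "(1 / (real J - 1)) * (\<Sum>j<J. (a j \<omega>)\<^sup>2) = (w - bb H S J (V i \<omega>) w) \<bullet> (Cm H J (V i \<omega>) *v (w - bb H S J (V i \<omega>) w))"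
      unfolding Cm_form a_def aa_def by (simp add: power2_eq_square)
    then show ?thesis unfolding Bf_def using quad_identity_ens[OF S] by simp
  qed
  have J1: "0 < real J - 1" using J2 by simp
  have "expectation (\<lambda>\<omega>. w \<bullet> (Cm H J (V (Suc i) \<omega>) *v w))
     = (1 / (real J - 1)) * expectation (\<lambda>\<omega>. \<Sum>j<J. (a j \<omega> + ((\<Sum>c\<in>UNIV. b c \<omega> * x j c \<omega>) - (1 / real J) * (\<Sum>k<J. \<Sum>c\<in>UNIV. b c \<omega> * x k c \<omega>)))\<^sup>2)"
    unfolding Qform by simp
  also have "\<dots> \<le> (1 / (real J - 1)) * (expectation (\<lambda>\<omega>. \<Sum>j<J. (a j \<omega>)\<^sup>2) + (real J - 1) * expectation Bf)"
    using alg(2) J1 by (intro mult_left_mono) auto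
  also have "\<dots> = expectation (\<lambda>\<omega>. (1 / (real J - 1)) * (\<Sum>j<J. (a j \<omega>)\<^sup>2) + Bf \<omega>)"
    using aI BfI J1 by (simp add: Bochner_Integration.integral_add field_simps)
  also have "\<dots> = expectation (\<lambda>\<omega>. w \<bullet> (S *v w) - (S *v w) \<bullet> (Km H S J (V i \<omega>) *v (S *v w)))"
    unfolding pt ..
  also have "\<dots> = w \<bullet> (S *v w) - expectation (\<lambda>\<omega>. (S *v w) \<bullet> (Km H S J (V i \<omega>) *v (S *v w)))"
    using KI by (simp add: Bochner_Integration.integral_diff prob_space)
  finally show "expectation (\<lambda>\<omega>. w \<bullet> (Cm H J (V (Suc i) \<omega>) *v w))
       \<le> w \<bullet> (S *v w) - expectation (\<lambda>\<omega>. (S *v w) \<bullet> (Km H S J (V i \<omega>) *v (S *v w)))" .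
qed

end

lemma quad_bounded_linear: "bounded_linear (\<lambda>A::real^'n^'n. x \<bullet> (A *v z))"
proof -
  have "linear (\<lambda>A::real^'n^'n. x \<bullet> (A *v z))"
    by (rule linearI) (simp_all add: matrix_vector_mult_add_rdistrib inner_add_right
        scaleR_matrix_vector_assoc[symmetric])
  then show ?thesis by (simp add: linear_conv_bounded_linear)
qed

lemma integral_quad:
  fixes F :: "'a \<Rightarrow> real^'n^'n"
  assumes "integrable M F"
  shows "x \<bullet> (integral\<^sup>L M F *v z) = (\<integral>\<omega>. x \<bullet> (F \<omega> *v z) \<partial>M)"
    "integrable M (\<lambda>\<omega>. x \<bullet> (F \<omega> *v z))"
  using integral_bounded_linear[OF quad_bounded_linear assms, of x z]
    integrable_bounded_linear[OF quad_bounded_linear assms, of x z] by simp_all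

lemma entry_polar:
  fixes A :: "real^'n^'n"
  assumes "transpose A = A"
  shows "A $ a $ c = ((axis a 1 + axis c 1) \<bullet> (A *v (axis a 1 + axis c 1)) - axis a 1 \<bullet> (A *v axis a 1) - axis c 1 \<bullet> (A *v axis c 1)) / 2"
proof -
  have "axis c 1 \<bullet> (A *v axis a 1) = axis a 1 \<bullet> (A *v axis c 1)"
    using sym_mv_inner[OF assms, of "axis a (1::real)" "axis c 1"] by (simp add: inner_commute)
  then show ?thesis unfolding entry_form[of A a c]
    by (simp add: matrix_vector_right_distrib inner_add_left inner_add_right)
qed

lemma integrable_from_quads:
  fixes F :: "'a \<Rightarrow> real^'n^'n"
  assumes Q: "\<And>w. integrable M (\<lambda>\<omega>. w \<bullet> (F \<omega> *v w))" and sym: "\<And>\<omega>. transpose (F \<omega>) = F \<omega>"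
  shows "integrable M F"
proof -
  have ent: "integrable M (\<lambda>\<omega>. F \<omega> $ a $ c)" for a c
    unfolding entry_polar[OF sym] using Q by auto
  have comp: "integrable M (\<lambda>\<omega>. F \<omega> \<bullet> b)" if hb: "b \<in> Basis" for b
  proof -
    obtain a c where b: "b = axis a (axis c (1::real))" using hb unfolding Basis_vec_def by auto
    have "(\<lambda>\<omega>. F \<omega> \<bullet> b) = (\<lambda>\<omega>. F \<omega> $ a $ c)" unfolding b by (simp add: inner_axis)
    then show ?thesis using ent by simp
  qed
  have "F = (\<lambda>\<omega>. \<Sum>b\<in>Basis. (F \<omega> \<bullet> b) *\<^sub>R b)" by (simp add: euclidean_representation)
  moreover have "integrable M (\<lambda>\<omega>. \<Sum>b\<in>Basis. (F \<omega> \<bullet> b) *\<^sub>R b)"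
    using comp by (intro Bochner_Integration.integrable_sum integrable_scaleR_left) auto
  ultimately show ?thesis by simp
qed

lemma transpose_diff_mat: "transpose (A - B) = transpose A - (transpose B :: real^'n^'n)"
  by (simp add: transpose_def vec_eq_iff)

lemma Cnext_quad:
  fixes S K :: "real^'n^'n"
  assumes "transpose S = S"
  shows "w \<bullet> ((S - S ** K ** S) *v w) = w \<bullet> (S *v w) - (S *v w) \<bullet> (K *v (S *v w))"
proof -
  have "w \<bullet> ((S ** K ** S) *v w) = (S *v w) \<bullet> (K *v (S *v w))"
    using sym_mv_inner[OF assms, of w "K *v (S *v w)"]
    by (simp add: matrix_vector_mul_assoc[symmetric])
  then show ?thesis by (simp add: matrix_vector_mult_diff_rdistrib inner_diff_right)
qed

lemma Cnext_psd:
  fixes C S :: "real^'n^'n"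
  assumes C: "psd C" and S: "sym_posdef S"
  shows "psd (S - S ** matrix_inv (C + S) ** S)"
proof -
  note FS = sym_posdef_facts[OF S]
  have Kt: "transpose (matrix_inv (C + S)) = matrix_inv (C + S)"
    using sym_posdef_facts(3)[OF psd_add_posdef[OF C S]] .
  have t: "transpose (S - S ** matrix_inv (C + S) ** S) = S - S ** matrix_inv (C + S) ** S"
    by (simp add: transpose_diff_mat matrix_transpose_mul FS(2) Kt matrix_mul_assoc)
  have "0 \<le> w \<bullet> ((S - S ** matrix_inv (C + S) ** S) *v w)" for w
  proof -
    define b where "b = matrix_inv (C + S) *v (C *v w)"
    have "0 \<le> (w - b) \<bullet> (C *v (w - b))" using C unfolding psd_def by blast
    moreover have "0 \<le> b \<bullet> (S *v b)" by (rule FS(4))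
    moreover have "(w - b) \<bullet> (C *v (w - b)) + b \<bullet> (S *v b) = w \<bullet> (S *v w) - (S *v w) \<bullet> (matrix_inv (C + S) *v (S *v w))"
      unfolding b_def by (rule key_identity[OF C S])
    ultimately show ?thesis unfolding Cnext_quad[OF FS(2)] by linarith
  qed
  then show ?thesis using t unfolding psd_def by blast
qed

lemma Cseq_psd:
  assumes S: "sym_posdef S"
  shows "psd (Cseq H S (emp_cov J v0) i)"
proof (induction i)
  case 0 show ?case using Cm_psd[of H J v0] unfolding Cm_def by simp
next
  case (Suc i) then show ?case by (simp add: Cnext_psd[OF _ S])
qed

context eki_setup begin

lemma main:
  "integrable M (\<lambda>\<omega>. Cm H J (V i \<omega>)) \<and> loewner_le (expectation (\<lambda>\<omega>. Cm H J (V i \<omega>))) (Cseq H S (emp_cov J v0) i)"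
proof (induction i)
  case 0
  have V0: "V 0 \<omega> = v0" for \<omega> unfolding V_def by simp
  have I: "integrable M (\<lambda>\<omega>. Cm H J (V 0 \<omega>))" unfolding V0 by simp
  have E: "expectation (\<lambda>\<omega>. Cm H J (V 0 \<omega>)) = Cm H J v0" unfolding V0 by (simp add: prob_space)
  show ?case using I unfolding E loewner_le_def pos_semidef_def by (simp add: Cm_def transpose_def vec_eq_iff)
next
  case (Suc i)
  define Cd where "Cd = Cseq H S (emp_cov J v0) i"
  define Cd' where "Cd' = Cseq H S (emp_cov J v0) (Suc i)"
  have Cd'_def2: "Cd' = S - S ** matrix_inv (Cd + S) ** S" unfolding Cd_def Cd'_def by simp
  have IH1: "integrable M (\<lambda>\<omega>. Cm H J (V i \<omega>))" and IH2: "loewner_le (expectation (\<lambda>\<omega>. Cm H J (V i \<omega>))) Cd"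
    using Suc.IH unfolding Cd_def by auto
  have symC: "transpose (Cm H J v) = Cm H J v" for v using Cm_psd[of H J v] unfolding psd_def by simp
  have I: "integrable M (\<lambda>\<omega>. Cm H J (V (Suc i) \<omega>))"
    by (rule integrable_from_quads[OF step_quad(1) symC])
  note FS = sym_posdef_facts[OF S]
  have Cdpsd: "psd Cd" unfolding Cd_def by (rule Cseq_psd[OF S])
  have Cd'psd: "psd Cd'" unfolding Cd'_def by (rule Cseq_psd[OF S])
  have CdS: "sym_posdef (Cd + S)" by (rule psd_add_posdef[OF Cdpsd S])
  define EC' where "EC' = expectation (\<lambda>\<omega>. Cm H J (V (Suc i) \<omega>))"
  define EC where "EC = expectation (\<lambda>\<omega>. Cm H J (V i \<omega>))"
  have symE: "transpose EC' = EC'"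
  proof (rule sym_by_entries)
    fix a c
    have "EC' $ a $ c = expectation (\<lambda>\<omega>. axis a 1 \<bullet> (Cm H J (V (Suc i) \<omega>) *v axis c 1))"
      unfolding EC'_def entry_form[of _ a c] integral_quad(1)[OF I] ..
    also have "\<dots> = expectation (\<lambda>\<omega>. axis c 1 \<bullet> (Cm H J (V (Suc i) \<omega>) *v axis a 1))"
      using sym_mv_inner[OF symC] by (simp add: inner_commute)
    also have "\<dots> = EC' $ c $ a"
      unfolding EC'_def entry_form[of _ c a] integral_quad(1)[OF I] ..
    finally show "EC' $ a $ c = EC' $ c $ a" .
  qed
  have quad: "w \<bullet> (EC' *v w) \<le> w \<bullet> (Cd' *v w)" for w
  proof -
    define z where "z = S *v w"
    define u where "u = matrix_inv (Cd + S) *v z"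
    have Au: "(Cd + S) *v u = z" unfolding u_def by (rule matrix_inv_mv(1)[OF sym_posdef_facts(1)[OF CdS]])
    have tang: "2 * (z \<bullet> u) - (u \<bullet> (Cm H J (V i \<omega>) *v u) + u \<bullet> (S *v u)) \<le> z \<bullet> (Km H S J (V i \<omega>) *v z)" for \<omega>
    proof -
      note F = sym_posdef_facts[OF Km_facts(1)[OF S, of H J "V i \<omega>"]]
      have "2 * (z \<bullet> u) - u \<bullet> ((Cm H J (V i \<omega>) + S) *v u) \<le> z \<bullet> (matrix_inv (Cm H J (V i \<omega>) + S) *v z)"
        by (rule inv_tangent[OF F(1) F(2) F(4)])
      then show ?thesis unfolding Km_def by (simp add: matrix_vector_mult_add_rdistrib inner_add_right)
    qed
    have IuC: "integrable M (\<lambda>\<omega>. u \<bullet> (Cm H J (V i \<omega>) *v u))" by (rule integral_quad(2)[OF IH1])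
    have IzK: "integrable M (\<lambda>\<omega>. z \<bullet> (Km H S J (V i \<omega>) *v z))"
    proof -
      have "\<bar>z \<bullet> (Km H S J v *v z)\<bar> \<le> w \<bullet> (S *v w)" for v
      proof -
        have "0 \<le> z \<bullet> (Km H S J v *v z)" using Km_facts(4)[OF S] unfolding psd_def by blast
        moreover have "0 \<le> (w - bb H S J v w) \<bullet> (Cm H J v *v (w - bb H S J v w))" using Cm_psd unfolding psd_def by blast
        moreover have "0 \<le> bb H S J v w \<bullet> (S *v bb H S J v w)" using FS(4) .
        moreover have "(w - bb H S J v w) \<bullet> (Cm H J v *v (w - bb H S J v w)) + bb H S J v w \<bullet> (S *v bb H S J v w)
          = w \<bullet> (S *v w) - (S *v w) \<bullet> (Km H S J v *v (S *v w))" by (rule quad_identity_ens[OF S])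
        ultimately show ?thesis unfolding z_def by linarith
      qed
      then show ?thesis by (rule past_int[OF ensf_quadK])
    qed
    have "2 * (z \<bullet> u) - (u \<bullet> (EC *v u) + u \<bullet> (S *v u)) = expectation (\<lambda>\<omega>. 2 * (z \<bullet> u) - (u \<bullet> (Cm H J (V i \<omega>) *v u) + u \<bullet> (S *v u)))"
      unfolding EC_def integral_quad(1)[OF IH1] using IuC
      by (simp add: Bochner_Integration.integral_diff Bochner_Integration.integral_add prob_space)
    also have "\<dots> \<le> expectation (\<lambda>\<omega>. z \<bullet> (Km H S J (V i \<omega>) *v z))"
      by (rule integral_mono[OF _ IzK tang]) (use IuC in auto)
    finally have low: "2 * (z \<bullet> u) - (u \<bullet> (EC *v u) + u \<bullet> (S *v u)) \<le> expectation (\<lambda>\<omega>. z \<bullet> (Km H S J (V i \<omega>) *v z))" .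
    have "0 \<le> u \<bullet> ((Cd - EC) *v u)" using IH2 unfolding EC_def loewner_le_def pos_semidef_def by blast
    then have le: "u \<bullet> (EC *v u) \<le> u \<bullet> (Cd *v u)" by (simp add: matrix_vector_mult_diff_rdistrib inner_diff_right)
    have zu: "u \<bullet> (Cd *v u) + u \<bullet> (S *v u) = z \<bullet> u"
      using Au by (simp add: matrix_vector_mult_add_rdistrib inner_add_right[symmetric] inner_commute)
    have "w \<bullet> (EC' *v w) = expectation (\<lambda>\<omega>. w \<bullet> (Cm H J (V (Suc i) \<omega>) *v w))"
      unfolding EC'_def integral_quad(1)[OF I] ..
    also have "\<dots> \<le> w \<bullet> (S *v w) - expectation (\<lambda>\<omega>. z \<bullet> (Km H S J (V i \<omega>) *v z))"
      unfolding z_def by (rule step_quad(2))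
    also have "\<dots> \<le> w \<bullet> (S *v w) - z \<bullet> u" using low le zu by linarith
    also have "\<dots> = w \<bullet> (Cd' *v w)"
      unfolding Cd'_def2 Cnext_quad[OF FS(2)] z_def u_def ..
    finally show ?thesis .
  qed
  have "pos_semidef (Cd' - EC')"
    unfolding pos_semidef_def
  proof
    show "transpose (Cd' - EC') = Cd' - EC'"
      using Cd'psd symE unfolding psd_def by (simp add: transpose_diff_mat)
    show "\<forall>x. 0 \<le> x \<bullet> ((Cd' - EC') *v x)"
      using quad by (simp add: matrix_vector_mult_diff_rdistrib inner_diff_right)
  qed
  then show ?case using I unfolding loewner_le_def EC'_def Cd'_def by simp
qed

end

theorem propositionA1:
  fixes H :: "real^'d^'n" and S :: "real^'n^'n" and y :: "real^'n"
    and J :: nat and v0 :: "nat \<Rightarrow> real^'d"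
    and M :: "'w measure" and \<epsilon> :: "nat \<Rightarrow> nat \<Rightarrow> 'w \<Rightarrow> real^'n"
  assumes "sym_posdef S"
    and "J \<ge> 2"
    and "prob_space M"
    and "\<And>i j. \<epsilon> i j \<in> borel_measurable M"
    and "prob_space.indep_vars M (\<lambda>_. borel) (\<lambda>p. \<epsilon> (fst p) (snd p)) {p. snd p < J}"
    and "\<And>i j. j < J \<Longrightarrow> distr M borel (\<epsilon> i j) = gaussian S"
  shows "\<forall>i. integrable M (\<lambda>\<omega>. H ** emp_cov J (eki_ens H S y J v0 (\<lambda>i j. \<epsilon> i j \<omega>) i) ** transpose H)
           \<and> loewner_le
               (integral\<^sup>L M (\<lambda>\<omega>. H ** emp_cov J (eki_ens H S y J v0 (\<lambda>i j. \<epsilon> i j \<omega>) i) ** transpose H))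
               (Cseq H S (emp_cov J v0) i)"
proof -
  have loc: "eki_setup M S J \<epsilon>"
    unfolding eki_setup_def eki_setup_axioms_def
    by (intro conjI allI impI assms(1-5) assms(6)[rule_format])
  interpret eki_setup M H S y J v0 \<epsilon> by (rule loc)
  show ?thesis
  proof (intro allI)
    fix i
    show "integrable M (\<lambda>\<omega>. H ** emp_cov J (eki_ens H S y J v0 (\<lambda>i j. \<epsilon> i j \<omega>) i) ** transpose H)
           \<and> loewner_le
               (integral\<^sup>L M (\<lambda>\<omega>. H ** emp_cov J (eki_ens H S y J v0 (\<lambda>i j. \<epsilon> i j \<omega>) i) ** transpose H))
               (Cseq H S (emp_cov J v0) i)"
      using main[of i] unfolding Cm_def V_def .
  qed
qed

end
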